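(* Let $a,b,r,s,t,u,p,q,v,w$ be indeterminates. Define monic polynomials $p_n(x)$ by $p_{-1}(x)=0$, $p_0(x)=1$ and $$p_{n+1}(x)=(x-b_n)p_n(x)-\lambda_n p_{n-1}(x)\quad(n\ge 0),$$ where $b_n=a[n+1]_{r,s}+b[n]_{t,u}$ and $\lambda_n=ab[n]_{p,q}[n]_{v,w}$. Let $\mathcal L$ be the unique linear functional on polynomials in $x$ (with coefficients rational functions in the parameters) such that $\mathcal L(1)=1$ and $\mathcal L(p_n)=0$ for all $n\ge1$, and let $\mu_n=\mathcal L(x^n)$ be its $n$-th moment. Then for every $n\ge 0$, $$\mu_n=\sum_{\sigma\in S_n} r^{\mathrm{lsg(sing)}(\sigma)}s^{\mathrm{rsg(sing)}(\sigma)}t^{\mathrm{lsg(cont)}(\sigma)}u^{\mathrm{rsg(cont)}(\sigma)}p^{\mathrm{lsg(op)}(\sigma)}q^{\mathrm{rsg(op)}(\sigma)}v^{\mathrm{lsg(clos)}(\sigma)}w^{\mathrm{rsg(clos)}(\sigma)}a^{\mathrm{run}(\sigma)}b^{\,n-\mathrm{run}(\sigma)}.$$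
   Context: Notation: $[n]_{r,s}=\frac{r^n-s^n}{r-s}=r^{n-1}+r^{n-2}s+\dots+s^{n-1}$ (so $[0]_{r,s}=0$). A permutation $\sigma\in S_n$ is written as the word $\sigma(1)\sigma(2)\cdots\sigma(n)$. Its runs are the maximal contiguous increasing segments $\sigma(i)<\sigma(i+1)<\dots<\sigma(j)$ of this word; $\mathrm{run}(\sigma)$ denotes the number of runs (equal to the number of descents plus one). A run of length at least 2 is a proper run; a run of length 1 is a singleton run. The values of $\sigma$ are split into four classes: $\mathrm{op}(\sigma)$ = first elements of proper runs (openers), $\mathrm{clos}(\sigma)$ = last elements of proper runs (closers), $\mathrm{sing}(\sigma)$ = elements forming singleton runs, $\mathrm{cont}(\sigma)$ = all other elements (continuators). For $i\in\{1,\dots,n\}$, $\mathrm{lsg}(i)$ is the number of runs of $\sigma$ lying strictly to the left of $i$ (i.e. not containing $i$ and positioned before it) that contain both an element smaller than $i$ and an element greater than $i$; $\mathrm{rsg}(i)$ is the analogous number of runs strictly to the right of $i$. For a class $X\in\{\mathrm{op},\mathrm{clos},\mathrm{sing},\mathrm{cont}\}$, $\mathrm{lsg}(X)(\sigma)=\sum_{i\in X(\sigma)}\mathrm{lsg}(i)$ and $\mathrm{rsg}(X)(\sigma)=\sum_{i\in X(\sigma)}\mathrm{rsg}(i)$. *)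

theory Defs
  imports "HOL-Computational_Algebra.Polynomial"
begin

definition qbr :: "'a::comm_ring_1 \<Rightarrow> 'a \<Rightarrow> nat \<Rightarrow> 'a" where
  "qbr r s n = (\<Sum>i<n. r ^ (n - 1 - i) * s ^ i)"

definition bcoef :: "'a::comm_ring_1 \<Rightarrow> 'a \<Rightarrow> 'a \<Rightarrow> 'a \<Rightarrow> 'a \<Rightarrow> 'a \<Rightarrow> nat \<Rightarrow> 'a" where
  "bcoef a b r s t u n = a * qbr r s (n + 1) + b * qbr t u n"

definition lcoef :: "'a::comm_ring_1 \<Rightarrow> 'a \<Rightarrow> 'a \<Rightarrow> 'a \<Rightarrow> 'a \<Rightarrow> 'a \<Rightarrow> nat \<Rightarrow> 'a" where
  "lcoef a b p q v w n = a * b * qbr p q n * qbr v w n"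

fun OP :: "'a::comm_ring_1 \<Rightarrow> 'a \<Rightarrow> 'a \<Rightarrow> 'a \<Rightarrow> 'a \<Rightarrow> 'a \<Rightarrow> 'a \<Rightarrow> 'a \<Rightarrow> 'a \<Rightarrow> 'a
            \<Rightarrow> nat \<Rightarrow> 'a poly" where
  "OP a b r s t u p q v w 0 = 1"
| "OP a b r s t u p q v w (Suc 0) = [:- bcoef a b r s t u 0, 1:]"
| "OP a b r s t u p q v w (Suc (Suc n)) =
     [:- bcoef a b r s t u (Suc n), 1:] * OP a b r s t u p q v w (Suc n)
     - smult (lcoef a b p q v w (Suc n)) (OP a b r s t u p q v w n)"

(* Permutations of {1..n} are represented as words (lists) w = [w!0, ..., w!(n-1)];
   positions are 0-based. *)

definition run_start :: "nat list \<Rightarrow> nat \<Rightarrow> bool" where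
  "run_start w i \<longleftrightarrow> i < length w \<and> (i = 0 \<or> w ! (i - 1) > w ! i)"

definition run_end :: "nat list \<Rightarrow> nat \<Rightarrow> bool" where
  "run_end w i \<longleftrightarrow> i < length w \<and> (Suc i = length w \<or> w ! i > w ! Suc i)"

definition run_end_of :: "nat list \<Rightarrow> nat \<Rightarrow> nat" where
  "run_end_of w i = (LEAST j. i \<le> j \<and> run_end w j)"

definition run_elems :: "nat list \<Rightarrow> nat \<Rightarrow> nat set" where
  "run_elems w st = {w ! j | j. st \<le> j \<and> j \<le> run_end_of w st}"

definition straddles :: "nat list \<Rightarrow> nat \<Rightarrow> nat \<Rightarrow> bool" where
  "straddles w st x \<longleftrightarrow> (\<exists>y\<in>run_elems w st. y < x) \<and> (\<exists>y\<in>run_elems w st. x < y)"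

definition nruns :: "nat list \<Rightarrow> nat" where
  "nruns w = card {i. run_start w i}"

definition lsg :: "nat list \<Rightarrow> nat \<Rightarrow> nat" where
  "lsg w k = card {st. run_start w st \<and> run_end_of w st < k \<and> straddles w st (w ! k)}"

definition rsg :: "nat list \<Rightarrow> nat \<Rightarrow> nat" where
  "rsg w k = card {st. run_start w st \<and> k < st \<and> straddles w st (w ! k)}"

definition is_op :: "nat list \<Rightarrow> nat \<Rightarrow> bool" where
  "is_op w k \<longleftrightarrow> run_start w k \<and> \<not> run_end w k"
definition is_clos :: "nat list \<Rightarrow> nat \<Rightarrow> bool" where
  "is_clos w k \<longleftrightarrow> run_end w k \<and> \<not> run_start w k"
definition is_sing :: "nat list \<Rightarrow> nat \<Rightarrow> bool" where
  "is_sing w k \<longleftrightarrow> run_start w k \<and> run_end w k"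
definition is_cont :: "nat list \<Rightarrow> nat \<Rightarrow> bool" where
  "is_cont w k \<longleftrightarrow> k < length w \<and> \<not> run_start w k \<and> \<not> run_end w k"

definition lsgX :: "(nat list \<Rightarrow> nat \<Rightarrow> bool) \<Rightarrow> nat list \<Rightarrow> nat" where
  "lsgX X w = (\<Sum>k\<in>{k. k < length w \<and> X w k}. lsg w k)"
definition rsgX :: "(nat list \<Rightarrow> nat \<Rightarrow> bool) \<Rightarrow> nat list \<Rightarrow> nat" where
  "rsgX X w = (\<Sum>k\<in>{k. k < length w \<and> X w k}. rsg w k)"

definition perms :: "nat \<Rightarrow> nat list set" where
  "perms n = {w. distinct w \<and> set w = {1..n}}"

end

theory Submission
  imports Defs
begin
context fixes a b r s t u p q v w :: "'a::comm_ring_1" begin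

fun nu :: "nat \<Rightarrow> nat \<Rightarrow> 'a" where
  "nu 0 k = (if k = 0 then 1 else 0)"
| "nu (Suc m) k = (if k = 0 then 0 else nu m (k - 1)) + bcoef a b r s t u k * nu m k
     + lcoef a b p q v w (Suc k) * nu m (Suc k)"

lemma nu_zero: "m < k \<Longrightarrow> nu m k = 0"
  by (induction m arbitrary: k) auto

lemma lcoef0: "lcoef a b p q v w 0 = 0"
  by (simp add: lcoef_def qbr_def)

lemma x_OP: "[:0,1:] * OP a b r s t u p q v w k = OP a b r s t u p q v w (Suc k)
   + smult (bcoef a b r s t u k) (OP a b r s t u p q v w k)
   + smult (lcoef a b p q v w k) (OP a b r s t u p q v w (k - 1))"
proof (cases k)
  case 0
  then show ?thesis by (simp add: lcoef0)
next
  case (Suc n)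
  have e: "[:- c, 1:] = [:0,1:] - [:c:]" for c :: 'a by simp
  show ?thesis unfolding Suc
    by (simp only: OP.simps e) (simp add: algebra_simps)
qed

lemma x_pow: "[:0,1:] ^ m = (\<Sum>k\<le>m. smult (nu m k) (OP a b r s t u p q v w k))"
proof (induction m)
  case 0
  then show ?case by simp
next
  case (Suc m)
  define P where "P = OP a b r s t u p q v w"
  define bc where "bc = bcoef a b r s t u"
  define lc where "lc = lcoef a b p q v w"
  have lc0: "lc 0 = 0" by (simp add: lc_def lcoef0)
  have "[:0,1:] ^ Suc m = (\<Sum>k\<le>m. smult (nu m k) ([:0,1:] * P k))"
    using Suc by (simp add: P_def sum_distrib_left mult_smult_right)
  also have "\<dots> = (\<Sum>k\<le>m. smult (nu m k) (P (Suc k)))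
      + (\<Sum>k\<le>m. smult (bc k * nu m k) (P k))
      + (\<Sum>k\<le>m. smult (lc k * nu m k) (P (k - 1)))"
    unfolding P_def bc_def lc_def x_OP
    by (simp add: sum.distrib smult_add_right mult.commute)
  also have "(\<Sum>k\<le>m. smult (nu m k) (P (Suc k))) =
     (\<Sum>k\<le>Suc m. smult (if k = 0 then 0 else nu m (k - 1)) (P k))"
    by (subst sum.atMost_Suc_shift) simp
  also have "(\<Sum>k\<le>m. smult (bc k * nu m k) (P k)) = (\<Sum>k\<le>Suc m. smult (bc k * nu m k) (P k))"
    by (simp add: nu_zero)
  also have "(\<Sum>k\<le>m. smult (lc k * nu m k) (P (k - 1))) =
      (\<Sum>k\<le>Suc m. smult (lc (Suc k) * nu m (Suc k)) (P k))"
  proof -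
    define f where "f j = smult (lc j * nu m j) (P (j - 1))" for j
    have "(\<Sum>k\<le>Suc (Suc m). f k) = f 0 + (\<Sum>k\<le>Suc m. f (Suc k))"
      by (rule sum.atMost_Suc_shift)
    moreover have "(\<Sum>k\<le>Suc (Suc m). f k) = (\<Sum>k\<le>m. f k)"
      by (simp add: f_def nu_zero)
    ultimately show ?thesis by (simp add: f_def lc0)
  qed
  finally show ?case
    by (simp add: sum.distrib[symmetric] smult_add_left[symmetric] P_def bc_def lc_def algebra_simps)
qed

end

type_synonym st = "(nat list \<times> bool) list"

definition elems :: "st \<Rightarrow> nat list" where "elems R = concat (map fst R)"
definition nopen :: "st \<Rightarrow> nat" where "nopen R = length (filter snd R)"
definition part :: "nat \<Rightarrow> nat list \<times> bool \<Rightarrow> bool" where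
  "part x c \<longleftrightarrow> (\<exists>y\<in>set (fst c). y < x) \<and> ((\<exists>y\<in>set (fst c). x < y) \<or> snd c)"
definition nparts :: "nat \<Rightarrow> st \<Rightarrow> nat" where "nparts x R = length (filter (part x) R)"

fun lsgL :: "nat \<Rightarrow> st \<Rightarrow> nat" where
  "lsgL x [] = 0"
| "lsgL x (c # R) = (if x \<in> set (fst c) then 0 else (if part x c then 1 else 0) + lsgL x R)"
fun rsgL :: "nat \<Rightarrow> st \<Rightarrow> nat" where
  "rsgL x [] = 0"
| "rsgL x (c # R) = (if x \<in> set (fst c) then nparts x R else rsgL x R)"
fun clsL :: "nat \<Rightarrow> st \<Rightarrow> bool \<times> bool" where
  "clsL x [] = (False, False)"
| "clsL x (c # R) = (if x \<in> set (fst c) then (x = hd (fst c), x = last (fst c) \<and> \<not> snd c) else clsL x R)"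

definition valid :: "nat \<Rightarrow> st \<Rightarrow> bool" where
  "valid m R \<longleftrightarrow> distinct (elems R) \<and> set (elems R) = {1..m} \<and>
     (\<forall>c\<in>set R. fst c \<noteq> [] \<and> sorted_wrt (<) (fst c)) \<and>
     successively (\<lambda>c d. snd c \<or> hd (fst d) < last (fst c)) R"

definition SS :: "nat \<Rightarrow> nat \<Rightarrow> st set" where "SS m k = {R. valid m R \<and> nopen R = k}"

fun ins_run :: "nat \<Rightarrow> nat list \<times> bool \<Rightarrow> st \<Rightarrow> st" where
  "ins_run 0 c R = c # R"
| "ins_run (Suc j) c [] = [c]"
| "ins_run (Suc j) c (d # R) = d # (if snd d then ins_run j c R else ins_run (Suc j) c R)"

fun app_open :: "nat \<Rightarrow> (nat list \<times> bool \<Rightarrow> nat list \<times> bool) \<Rightarrow> st \<Rightarrow> st" where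
  "app_open j f [] = []"
| "app_open j f (d # R) = (if snd d then (if j = 0 then f d # R else d # app_open (j - 1) f R)
     else d # app_open j f R)"

definition rem :: "nat \<Rightarrow> st \<Rightarrow> st" where
  "rem x R = filter (\<lambda>c. fst c \<noteq> []) (map (\<lambda>c. (removeAll x (fst c), snd c \<or> x \<in> set (fst c))) R)"

lemma elems_simps[simp]: "elems [] = []" "elems (c # R) = fst c @ elems R"
  "elems (A @ B) = elems A @ elems B"
  by (auto simp: elems_def)

lemma nopen_simps[simp]: "nopen [] = 0" "nopen (c # R) = (if snd c then Suc (nopen R) else nopen R)"
  "nopen (A @ B) = nopen A + nopen B"
  by (auto simp: nopen_def)

lemma nparts_simps[simp]: "nparts x [] = 0" "nparts x (c # R) = (if part x c then Suc (nparts x R) else nparts x R)"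
  "nparts x (A @ B) = nparts x A + nparts x B"
  by (auto simp: nparts_def)

lemma lsgL_append: "lsgL x (A @ B) = (if x \<in> set (elems A) then lsgL x A else nparts x A + lsgL x B)"
  by (induction A) auto
lemma rsgL_append: "rsgL x (A @ B) = (if x \<in> set (elems A) then rsgL x A + nparts x B else rsgL x B)"
  by (induction A) auto
lemma clsL_append: "clsL x (A @ B) = (if x \<in> set (elems A) then clsL x A else clsL x B)"
  by (induction A) auto

lemma nopen_pos: "A \<noteq> [] \<Longrightarrow> snd (last A) \<Longrightarrow> 0 < nopen A"
  by (induction A) (auto split: if_splits)

lemma ins_run_split: "j \<le> nopen R \<Longrightarrow>
  \<exists>A B. R = A @ B \<and> nopen A = j \<and> (A = [] \<or> snd (last A)) \<and> ins_run j c R = A @ c # B"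
proof (induction j c R rule: ins_run.induct)
  case (1 c R)
  then show ?case by (intro exI[of _ "[]"] exI[of _ R]) auto
next
  case (2 j c)
  then show ?case by simp
next
  case (3 j c d R)
  show ?case
  proof (cases "snd d")
    case True
    with 3 obtain A B where "R = A @ B" "nopen A = j" "A = [] \<or> snd (last A)" "ins_run j c R = A @ c # B"
      by auto
    with True show ?thesis by (intro exI[of _ "d # A"] exI[of _ B]) auto
  next
    case False
    with 3 obtain A B where "R = A @ B" "nopen A = Suc j" "A = [] \<or> snd (last A)" "ins_run (Suc j) c R = A @ c # B"
      by auto
    with False show ?thesis by (intro exI[of _ "d # A"] exI[of _ B]) auto
  qed
qed

lemma ins_run_of_split: "A = [] \<or> snd (last A) \<Longrightarrow> ins_run (nopen A) c (A @ B) = A @ c # B"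
proof (induction A)
  case Nil
  then show ?case by simp
next
  case (Cons d A)
  show ?case
  proof (cases "snd d")
    case True
    then show ?thesis using Cons by (cases A) auto
  next
    case False
    then have "A \<noteq> []" "snd (last A)" using Cons.prems by (auto split: if_splits)
    then obtain n where "nopen A = Suc n" using nopen_pos gr0_conv_Suc by blast
    then show ?thesis using Cons False \<open>A \<noteq> []\<close> by auto
  qed
qed

lemma app_open_split: "j < nopen R \<Longrightarrow>
  \<exists>A d B. R = A @ d # B \<and> snd d \<and> nopen A = j \<and> app_open j f R = A @ f d # B"
proof (induction j f R rule: app_open.induct)
  case (1 j f)
  then show ?case by simp
next
  case (2 j f d R)
  show ?case
  proof (cases "snd d")
    case True
    show ?thesis
    proof (cases "j = 0")
      case True
      with \<open>snd d\<close> show ?thesis by (intro exI[of _ "[]"]) auto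
    next
      case False
      have "j - 1 < nopen R" using 2(3) \<open>snd d\<close> False by simp
      with \<open>snd d\<close> False 2(1) obtain A e B where "R = A @ e # B" "snd e" "nopen A = j - 1" "app_open (j - 1) f R = A @ f e # B"
        by blast
      with \<open>snd d\<close> False show ?thesis by (intro exI[of _ "d # A"]) auto
    qed
  next
    case False
    with 2 obtain A e B where "R = A @ e # B" "snd e" "nopen A = j" "app_open j f R = A @ f e # B"
      by auto
    with False show ?thesis by (intro exI[of _ "d # A"]) auto
  qed
qed

lemma app_open_of_split: "snd d \<Longrightarrow> app_open (nopen A) f (A @ d # B) = A @ f d # B"
  by (induction A) auto

lemma rem_other: "\<forall>c\<in>set R. fst c \<noteq> [] \<Longrightarrow> x \<notin> set (elems R) \<Longrightarrow> rem x R = R"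
  by (induction R) (auto simp: rem_def)

lemma rem_append: "rem x (A @ B) = rem x A @ rem x B"
  by (simp add: rem_def)

lemma rem_Cons: "rem x (c # R) = rem x [c] @ rem x R"
  by (simp add: rem_def)

abbreviation Pv :: "nat list \<times> bool \<Rightarrow> nat list \<times> bool \<Rightarrow> bool" where
  "Pv \<equiv> (\<lambda>c d. snd c \<or> hd (fst d) < last (fst c))"

lemma succ_mid: "successively P (A @ c # B) \<longleftrightarrow> successively P A \<and> successively P B \<and>
   (A = [] \<or> P (last A) c) \<and> (B = [] \<or> P c (hd B))"
  by (auto simp: successively_append_iff successively_Cons)

lemma succ_app: "successively P (A @ B) \<longleftrightarrow> successively P A \<and> successively P B \<and>
   (A = [] \<or> B = [] \<or> P (last A) (hd B))"
  by (auto simp: successively_append_iff)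

lemma hd_in_elems: "\<forall>c\<in>set B. fst c \<noteq> [] \<Longrightarrow> B \<noteq> [] \<Longrightarrow> hd (fst (hd B)) \<in> set (elems B)"
  by (cases B) auto

lemma last_in_elems: "\<forall>c\<in>set A. fst c \<noteq> [] \<Longrightarrow> A \<noteq> [] \<Longrightarrow> last (fst (last A)) \<in> set (elems A)"
proof -
  assume "\<forall>c\<in>set A. fst c \<noteq> []" "A \<noteq> []"
  then have "last A \<in> set A" "fst (last A) \<noteq> []" by auto
  then show ?thesis by (auto simp: elems_def intro!: bexI[of _ "last A"])
qed

lemma valid_parts: "valid m R \<longleftrightarrow> distinct (elems R) \<and> set (elems R) = {1..m} \<and>
     (\<forall>c\<in>set R. fst c \<noteq> []) \<and> (\<forall>c\<in>set R. sorted_wrt (<) (fst c)) \<and>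
     successively Pv R"
  unfolding valid_def by blast

lemma V1:
  assumes "valid m (A @ B)" "A = [] \<or> snd (last A)"
  shows "valid (Suc m) (A @ ([Suc m], ob) # B)"
proof -
  have ne: "\<forall>c\<in>set B. fst c \<noteq> []" using assms(1) by (auto simp: valid_def)
  have sub: "set (elems B) \<subseteq> {1..m}" "set (elems A) \<subseteq> {1..m}" using assms(1) by (auto simp: valid_def)
  have h: "B = [] \<or> Pv ([Suc m], ob) (hd B)"
    using hd_in_elems[OF ne] sub by force
  have s1: "successively Pv A" "successively Pv B"
    using assms(1) by (auto simp: valid_def succ_app)
  have "successively Pv (A @ ([Suc m], ob) # B)"
    unfolding succ_mid using s1 h assms(2) by auto
  moreover have "distinct (elems (A @ ([Suc m], ob) # B))"
    using assms(1) sub by (auto simp: valid_def)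
  moreover have "set (elems (A @ ([Suc m], ob) # B)) = {1..Suc m}"
    using assms(1) by (auto simp: valid_def)
  moreover have "\<forall>c\<in>set (A @ ([Suc m], ob) # B). fst c \<noteq> [] \<and> sorted_wrt (<) (fst c)"
    using assms(1) by (auto simp: valid_def)
  ultimately show ?thesis unfolding valid_def by blast
qed

lemma V2:
  assumes "valid m (A @ (ys, True) # B)"
  shows "valid (Suc m) (A @ (ys @ [Suc m], ob) # B)"
proof -
  have ne: "\<forall>c\<in>set B. fst c \<noteq> []" and ys: "ys \<noteq> []" "sorted_wrt (<) ys" using assms(1) by (auto simp: valid_def)
  have sub: "set (elems B) \<subseteq> {1..m}" "set (elems A) \<subseteq> {1..m}" "set ys \<subseteq> {1..m}"
    using assms(1) by (auto simp: valid_def)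
  have h: "B = [] \<or> Pv (ys @ [Suc m], ob) (hd B)"
    using hd_in_elems[OF ne] sub by force
  have so: "sorted_wrt (<) (ys @ [Suc m])" using ys sub by (force simp: sorted_wrt_append)
  have s1: "successively Pv A" "successively Pv B" "A = [] \<or> Pv (last A) (ys, True)"
    using assms(1) unfolding valid_def succ_mid by auto
  have "successively Pv (A @ (ys @ [Suc m], ob) # B)"
    unfolding succ_mid using s1 h ys by auto
  moreover have "distinct (elems (A @ (ys @ [Suc m], ob) # B))"
    using assms(1) sub by (auto simp: valid_def)
  moreover have "set (elems (A @ (ys @ [Suc m], ob) # B)) = {1..Suc m}"
    using assms(1) by (auto simp: valid_def)
  moreover have "\<forall>c\<in>set (A @ (ys @ [Suc m], ob) # B). fst c \<noteq> [] \<and> sorted_wrt (<) (fst c)"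
    using assms(1) so by (auto simp: valid_def)
  ultimately show ?thesis unfolding valid_def by blast
qed

lemma sub_top:
  assumes d: "distinct (X @ Suc m # Y)" and st: "set (X @ Suc m # Y) = {1..Suc m}"
  shows "set X \<subseteq> {1..m}" "set Y \<subseteq> {1..m}" "set X \<union> set Y = {1..m}"
proof -
  show "set X \<subseteq> {1..m}"
  proof
    fix x assume "x \<in> set X"
    then have "x \<in> {1..Suc m}" "x \<noteq> Suc m" using st d by auto
    then show "x \<in> {1..m}" by auto
  qed
  show "set Y \<subseteq> {1..m}"
  proof
    fix x assume "x \<in> set Y"
    then have "x \<in> {1..Suc m}" "x \<noteq> Suc m" using st d by auto
    then show "x \<in> {1..m}" by auto
  qed
  show "set X \<union> set Y = {1..m}"
  proof
    show "{1..m} \<subseteq> set X \<union> set Y"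
    proof
      fix x assume "x \<in> {1..m}"
      then have "x \<in> set (X @ Suc m # Y)" "x \<noteq> Suc m" using st by auto
      then show "x \<in> set X \<union> set Y" by auto
    qed
  qed (use \<open>set X \<subseteq> {1..m}\<close> \<open>set Y \<subseteq> {1..m}\<close> in auto)
qed

lemma V3:
  assumes "valid (Suc m) (A @ ([Suc m], ob) # B)"
  shows "valid m (A @ B) \<and> (A = [] \<or> snd (last A))"
proof -
  have ne: "\<forall>c\<in>set A. fst c \<noteq> []" using assms(1) by (auto simp: valid_def)
  have d: "distinct (elems A @ Suc m # elems B)" and st: "set (elems A @ Suc m # elems B) = {1..Suc m}"
    using assms by (auto simp: valid_def)
  note sub = sub_top[OF d st]
  have s1: "successively Pv A" "successively Pv B" "A = [] \<or> Pv (last A) ([Suc m], ob)"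
    using assms(1) unfolding valid_def succ_mid by (auto simp: successively_Cons)
  have lA: "A = [] \<or> snd (last A)"
  proof (rule ccontr)
    assume "\<not> (A = [] \<or> snd (last A))"
    then show False using s1(3) last_in_elems[OF ne] sub by force
  qed
  have "successively Pv (A @ B)" unfolding succ_app using s1 lA by auto
  moreover have "distinct (elems (A @ B))" using d by auto
  moreover have "set (elems (A @ B)) = {1..m}" using sub by auto
  moreover have "\<forall>c\<in>set (A @ B). fst c \<noteq> [] \<and> sorted_wrt (<) (fst c)"
    using assms(1) by (auto simp: valid_def)
  ultimately show ?thesis using lA unfolding valid_def by blast
qed

lemma V4:
  assumes "valid (Suc m) (A @ (ys @ [Suc m], ob) # B)" "ys \<noteq> []"
  shows "valid m (A @ (ys, True) # B)"
proof -
  have d: "distinct ((elems A @ ys) @ Suc m # elems B)" and st: "set ((elems A @ ys) @ Suc m # elems B) = {1..Suc m}"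
    using assms by (auto simp: valid_def)
  note sub = sub_top[OF d st]
  have s1: "successively Pv A" "successively Pv B" "A = [] \<or> Pv (last A) (ys @ [Suc m], ob)"
    using assms(1) unfolding valid_def succ_mid by (auto simp: successively_Cons)
  have "successively Pv (A @ (ys, True) # B)" unfolding succ_mid using s1 assms(2) by auto
  moreover have "distinct (elems (A @ (ys, True) # B))" using d by auto
  moreover have "set (elems (A @ (ys, True) # B)) = {1..m}" using sub by auto
  moreover have "\<forall>c\<in>set (A @ (ys, True) # B). fst c \<noteq> [] \<and> sorted_wrt (<) (fst c)"
    using assms by (auto simp: valid_def sorted_wrt_append)
  ultimately show ?thesis unfolding valid_def by blast
qed

context fixes a b r s t u p q v w :: "'a::comm_ring_1" begin

definition mnm :: "bool \<times> bool \<Rightarrow> nat \<Rightarrow> nat \<Rightarrow> 'a" where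
  "mnm c l k = (if fst c then a * (if snd c then r ^ l * s ^ k else p ^ l * q ^ k)
                else b * (if snd c then v ^ l * w ^ k else t ^ l * u ^ k))"

definition ew :: "st \<Rightarrow> nat \<Rightarrow> 'a" where
  "ew R x = mnm (clsL x R) (lsgL x R) (rsgL x R)"

definition wt :: "st \<Rightarrow> 'a" where
  "wt R = prod_list (map (ew R) (elems R))"

end

lemma in_elems: "c \<in> set A \<Longrightarrow> y \<in> set (fst c) \<Longrightarrow> y \<in> set (elems A)"
  by (auto simp: elems_def)

lemma ne_bound: "valid m R \<Longrightarrow> set A \<subseteq> set R \<Longrightarrow>
   \<forall>c\<in>set A. fst c \<noteq> [] \<and> (\<forall>y\<in>set (fst c). y < Suc m)"
proof
  fix c assume V: "valid m R" and A: "set A \<subseteq> set R" and c: "c \<in> set A"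
  then have cR: "c \<in> set R" by auto
  then have "fst c \<noteq> []" using V by (auto simp: valid_def)
  moreover have "\<forall>y\<in>set (fst c). y < Suc m"
  proof
    fix y assume "y \<in> set (fst c)"
    then have "y \<in> set (elems R)" using in_elems[OF cR] by blast
    then show "y < Suc m" using V by (auto simp: valid_def)
  qed
  ultimately show "fst c \<noteq> [] \<and> (\<forall>y\<in>set (fst c). y < Suc m)" by blast
qed

lemma nparts_top: "\<forall>c\<in>set A. fst c \<noteq> [] \<and> (\<forall>y\<in>set (fst c). y < x) \<Longrightarrow> nparts x A = nopen A"
proof (induction A)
  case Nil
  then show ?case by simp
next
  case (Cons c A)
  have "part x c \<longleftrightarrow> snd c" using Cons.prems by (cases "fst c") (auto simp: part_def)
  then show ?case using Cons by auto
qed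

lemma part_new: "x \<le> m \<Longrightarrow> \<not> part x ([Suc m], ob)"
  by (auto simp: part_def)

lemma part_ext: "x \<le> m \<Longrightarrow> part x (ys @ [Suc m], ob) = part x (ys, True)"
  by (auto simp: part_def)

lemma W1:
  assumes V: "valid m (A @ B)"
  shows "wt a b r s t u p q v w (A @ ([Suc m], ob) # B) =
         wt a b r s t u p q v w (A @ B) * mnm a b r s t u p q v w (True, \<not> ob) (nopen A) (nopen B)"
proof -
  define c where "c = ([Suc m], ob)"
  define R where "R = A @ B"
  define R' where "R' = A @ c # B"
  note ew = ew_def[of a b r s t u p q v w]
  have d: "distinct (elems A @ elems B)" and st: "set (elems A @ elems B) = {1..m}"
    using V by (auto simp: valid_def)
  have ne: "\<forall>c\<in>set A. fst c \<noteq> [] \<and> (\<forall>y\<in>set (fst c). y < Suc m)"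
    "\<forall>c\<in>set B. fst c \<noteq> [] \<and> (\<forall>y\<in>set (fst c). y < Suc m)"
    using ne_bound[OF V] by auto
  have eA: "map (ew a b r s t u p q v w R') (elems A) = map (ew a b r s t u p q v w R) (elems A)"
  proof (rule map_cong[OF refl])
    fix x assume x: "x \<in> set (elems A)"
    then have "x \<le> m" using st by auto
    then show "ew a b r s t u p q v w R' x = ew a b r s t u p q v w R x"
      using x unfolding ew R_def R'_def c_def
      by (simp add: lsgL_append rsgL_append clsL_append part_new)
  qed
  have eB: "map (ew a b r s t u p q v w R') (elems B) = map (ew a b r s t u p q v w R) (elems B)"
  proof (rule map_cong[OF refl])
    fix x assume x: "x \<in> set (elems B)"
    then have "x \<le> m" "x \<notin> set (elems A)" using st d by auto
    then show "ew a b r s t u p q v w R' x = ew a b r s t u p q v w R x"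
      using x unfolding ew R_def R'_def c_def
      by (simp add: lsgL_append rsgL_append clsL_append part_new)
  qed
  have nA: "Suc m \<notin> set (elems A)"
  proof
    assume "Suc m \<in> set (elems A)"
    moreover have "set (elems A) \<subseteq> {1..m}" using st by auto
    ultimately show False by auto
  qed
  have eS: "ew a b r s t u p q v w R' (Suc m) = mnm a b r s t u p q v w (True, \<not> ob) (nopen A) (nopen B)"
    unfolding ew R'_def c_def using nA
    by (simp add: lsgL_append rsgL_append clsL_append nparts_top[OF ne(1)] nparts_top[OF ne(2)])
  have 1: "wt a b r s t u p q v w R' = prod_list (map (ew a b r s t u p q v w R') (elems A)) *
     ew a b r s t u p q v w R' (Suc m) * prod_list (map (ew a b r s t u p q v w R') (elems B))"
    unfolding wt_def by (simp add: R'_def c_def)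
  have 2: "wt a b r s t u p q v w R = prod_list (map (ew a b r s t u p q v w R) (elems A)) *
     prod_list (map (ew a b r s t u p q v w R) (elems B))"
    unfolding wt_def by (simp add: R_def)
  show ?thesis
    unfolding R_def[symmetric] R'_def[symmetric] c_def[symmetric] 1 2 eA eB eS
    by (simp add: algebra_simps)
qed

lemma W2:
  assumes V: "valid m (A @ (ys, True) # B)"
  shows "wt a b r s t u p q v w (A @ (ys @ [Suc m], ob) # B) =
         wt a b r s t u p q v w (A @ (ys, True) # B) * mnm a b r s t u p q v w (False, \<not> ob) (nopen A) (nopen B)"
proof -
  define c where "c = (ys, True)"
  define c' where "c' = (ys @ [Suc m], ob)"
  define R where "R = A @ c # B"
  define R' where "R' = A @ c' # B"
  note ew = ew_def[of a b r s t u p q v w]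
  have d: "distinct (elems A @ ys @ elems B)" and st: "set (elems A @ ys @ elems B) = {1..m}"
    using V by (auto simp: valid_def)
  have ys: "ys \<noteq> []" using V by (auto simp: valid_def)
  have ne: "\<forall>c\<in>set A. fst c \<noteq> [] \<and> (\<forall>y\<in>set (fst c). y < Suc m)"
    "\<forall>c\<in>set B. fst c \<noteq> [] \<and> (\<forall>y\<in>set (fst c). y < Suc m)"
    using ne_bound[OF V] by auto
  have eA: "map (ew a b r s t u p q v w R') (elems A) = map (ew a b r s t u p q v w R) (elems A)"
  proof (rule map_cong[OF refl])
    fix x assume x: "x \<in> set (elems A)"
    then have "x \<le> m" using st by auto
    then show "ew a b r s t u p q v w R' x = ew a b r s t u p q v w R x"
      using x unfolding ew R_def R'_def c_def c'_def
      by (simp add: lsgL_append rsgL_append clsL_append part_ext)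
  qed
  have eY: "map (ew a b r s t u p q v w R') ys = map (ew a b r s t u p q v w R) ys"
  proof (rule map_cong[OF refl])
    fix x assume x: "x \<in> set ys"
    then have "x \<le> m" "x \<notin> set (elems A)" using st d by auto
    then show "ew a b r s t u p q v w R' x = ew a b r s t u p q v w R x"
      using x ys unfolding ew R_def R'_def c_def c'_def
      by (simp add: lsgL_append rsgL_append clsL_append part_ext)
  qed
  have eB: "map (ew a b r s t u p q v w R') (elems B) = map (ew a b r s t u p q v w R) (elems B)"
  proof (rule map_cong[OF refl])
    fix x assume x: "x \<in> set (elems B)"
    then have "x \<le> m" "x \<notin> set (elems A)" "x \<notin> set ys" using st d by auto
    then show "ew a b r s t u p q v w R' x = ew a b r s t u p q v w R x"
      using x unfolding ew R_def R'_def c_def c'_def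
      by (simp add: lsgL_append rsgL_append clsL_append part_ext)
  qed
  have nA: "Suc m \<notin> set (elems A)"
  proof
    assume "Suc m \<in> set (elems A)"
    moreover have "set (elems A) \<subseteq> {1..m}" using st by auto
    ultimately show False by auto
  qed
  have hy: "hd ys \<noteq> Suc m"
  proof -
    have "hd ys \<in> set ys" using ys by simp
    then have "hd ys \<le> m" using st by auto
    then show ?thesis by simp
  qed
  have eS: "ew a b r s t u p q v w R' (Suc m) = mnm a b r s t u p q v w (False, \<not> ob) (nopen A) (nopen B)"
    unfolding ew R'_def c'_def using nA hy ys
    by (simp add: lsgL_append rsgL_append clsL_append nparts_top[OF ne(1)] nparts_top[OF ne(2)])
  have 1: "wt a b r s t u p q v w R' = prod_list (map (ew a b r s t u p q v w R') (elems A)) *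
     prod_list (map (ew a b r s t u p q v w R') ys) *
     ew a b r s t u p q v w R' (Suc m) * prod_list (map (ew a b r s t u p q v w R') (elems B))"
    unfolding wt_def by (simp add: R'_def c'_def)
  have 2: "wt a b r s t u p q v w R = prod_list (map (ew a b r s t u p q v w R) (elems A)) *
     prod_list (map (ew a b r s t u p q v w R) ys) *
     prod_list (map (ew a b r s t u p q v w R) (elems B))"
    unfolding wt_def by (simp add: R_def c_def)
  show ?thesis
    unfolding R_def[symmetric] R'_def[symmetric] c_def[symmetric] c'_def[symmetric] 1 2 eA eB eS eY
    by (simp add: algebra_simps)
qed

lemma elem_in_run: "x \<in> set (elems R) \<Longrightarrow> \<exists>A c B. R = A @ c # B \<and> x \<in> set (fst c)"
proof -
  assume "x \<in> set (elems R)"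
  then obtain c where c: "c \<in> set R" "x \<in> set (fst c)" by (auto simp: elems_def)
  then obtain A B where "R = A @ c # B" by (meson split_list)
  with c show ?thesis by blast
qed

lemma sorted_max_last:
  fixes ys :: "nat list"
  assumes "sorted_wrt (<) ys" "x \<in> set ys" "\<forall>y\<in>set ys. y \<le> x"
  shows "ys = butlast ys @ [x]"
proof -
  have ne: "ys \<noteq> []" using assms(2) by auto
  have e: "ys = butlast ys @ [last ys]" using ne by simp
  have "last ys = x"
  proof (rule ccontr)
    assume "last ys \<noteq> x"
    then have "x \<in> set (butlast ys)" using assms(2) e by (metis butlast_append in_set_butlastD
          last_snoc rotate1.simps(2) set_ConsD set_rotate1 ne append_butlast_last_id)
    then have "x < last ys" using assms(1) e by (metis sorted_wrt_append list.set_intros(1))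
    moreover have "last ys \<le> x" using assms(3) ne by simp
    ultimately show False by simp
  qed
  then show ?thesis using e by simp
qed

lemma decomp:
  assumes "valid (Suc m) R'"
  shows "\<exists>A ys ob B. R' = A @ (ys @ [Suc m], ob) # B"
proof -
  have "Suc m \<in> set (elems R')" using assms by (auto simp: valid_def)
  then obtain A c B where R': "R' = A @ c # B" "Suc m \<in> set (fst c)" using elem_in_run by blast
  have "c \<in> set R'" using R' by auto
  then have so: "sorted_wrt (<) (fst c)" using assms by (auto simp: valid_def)
  have "\<forall>y\<in>set (fst c). y \<le> Suc m"
  proof
    fix y assume "y \<in> set (fst c)"
    then have "y \<in> set (elems R')" using in_elems[OF \<open>c \<in> set R'\<close>] by blast
    then show "y \<le> Suc m" using assms by (auto simp: valid_def)
  qed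
  then have "fst c = butlast (fst c) @ [Suc m]" using sorted_max_last[OF so R'(2)] by blast
  then have "R' = A @ (butlast (fst c) @ [Suc m], snd c) # B" using R' by (metis prod.collapse)
  then show ?thesis by blast
qed

lemma top_facts:
  assumes "valid (Suc m) (A @ (ys @ [Suc m], ob) # B)"
  shows "set (elems A) \<subseteq> {1..m}" "set ys \<subseteq> {1..m}" "set (elems B) \<subseteq> {1..m}"
    "\<forall>c\<in>set A. fst c \<noteq> [] \<and> (\<forall>y\<in>set (fst c). y < Suc m)"
    "\<forall>c\<in>set B. fst c \<noteq> [] \<and> (\<forall>y\<in>set (fst c). y < Suc m)"
proof -
  have d: "distinct ((elems A @ ys) @ Suc m # elems B)" and st: "set ((elems A @ ys) @ Suc m # elems B) = {1..Suc m}"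
    using assms by (auto simp: valid_def)
  note sub = sub_top[OF d st]
  show "set (elems A) \<subseteq> {1..m}" "set ys \<subseteq> {1..m}" "set (elems B) \<subseteq> {1..m}" using sub by auto
  show "\<forall>c\<in>set A. fst c \<noteq> [] \<and> (\<forall>y\<in>set (fst c). y < Suc m)"
  proof
    fix c assume c: "c \<in> set A"
    then have "fst c \<noteq> []" using assms by (auto simp: valid_def)
    moreover have "\<forall>y\<in>set (fst c). y < Suc m" using in_elems[OF c] sub(1) by force
    ultimately show "fst c \<noteq> [] \<and> (\<forall>y\<in>set (fst c). y < Suc m)" by blast
  qed
  show "\<forall>c\<in>set B. fst c \<noteq> [] \<and> (\<forall>y\<in>set (fst c). y < Suc m)"
  proof
    fix c assume c: "c \<in> set B"
    then have "fst c \<noteq> []" using assms by (auto simp: valid_def)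
    moreover have "\<forall>y\<in>set (fst c). y < Suc m" using in_elems[OF c] sub(2) by force
    ultimately show "fst c \<noteq> [] \<and> (\<forall>y\<in>set (fst c). y < Suc m)" by blast
  qed
qed

lemma cls_of:
  assumes "valid (Suc m) (A @ (ys @ [Suc m], ob) # B)"
  shows "clsL (Suc m) (A @ (ys @ [Suc m], ob) # B) = (ys = [], \<not> ob)"
proof -
  note tf = top_facts[OF assms]
  have nA: "Suc m \<notin> set (elems A)" using tf(1) by auto
  have "Suc m = hd (ys @ [Suc m]) \<longleftrightarrow> ys = []"
  proof (cases ys)
    case (Cons y ys')
    then have "y \<le> m" using tf(2) by auto
    then show ?thesis using Cons by auto
  qed simp
  then show ?thesis using nA by (simp add: clsL_append)
qed

lemma rem_mid:
  assumes "valid (Suc m) (A @ (ys @ [Suc m], ob) # B)"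
  shows "rem (Suc m) (A @ (ys @ [Suc m], ob) # B) = A @ (if ys = [] then [] else [(ys, True)]) @ B"
proof -
  note tf = top_facts[OF assms]
  have "rem (Suc m) A = A" by (rule rem_other) (use tf in auto)
  moreover have "rem (Suc m) B = B" by (rule rem_other) (use tf in auto)
  moreover have "removeAll (Suc m) ys = ys" using tf(2) by (auto intro: removeAll_id)
  ultimately show ?thesis
    by (subst rem_append, subst rem_Cons) (simp add: rem_def)
qed

lemma lsg_mid:
  assumes "valid (Suc m) (A @ (ys @ [Suc m], ob) # B)"
  shows "lsgL (Suc m) (A @ (ys @ [Suc m], ob) # B) = nopen A"
proof -
  note tf = top_facts[OF assms]
  have nA: "Suc m \<notin> set (elems A)" using tf(1) by auto
  show ?thesis using nA by (simp add: lsgL_append nparts_top[OF tf(4)])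
qed

lemma qbr_sum: "(\<Sum>i<n. x ^ i * y ^ (n - 1 - i)) = qbr x y n"
proof -
  have "qbr x y n = (\<Sum>i<n. x ^ (n - 1 - i) * y ^ i)" by (simp add: qbr_def)
  also have "\<dots> = (\<Sum>i<n. x ^ (n - 1 - (n - Suc i)) * y ^ (n - Suc i))"
    by (rule sum.nat_diff_reindex[symmetric])
  also have "\<dots> = (\<Sum>i<n. x ^ i * y ^ (n - 1 - i))"
    by (rule sum.cong) auto
  finally show ?thesis by simp
qed

lemma length_le_elems: "\<forall>c\<in>set R. fst c \<noteq> [] \<Longrightarrow> length R \<le> length (elems R)"
proof (induction R)
  case (Cons c R)
  then have "1 \<le> length (fst c)" by (cases "fst c") auto
  then show ?case using Cons by simp
qed simp

lemma run_le_elems: "c \<in> set R \<Longrightarrow> length (fst c) \<le> length (elems R)"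
  by (induction R) auto

lemma finite_SS: "finite (SS m k)"
proof -
  define X where "X = {ys. set ys \<subseteq> {1..m} \<and> length ys \<le> m} \<times> (UNIV :: bool set)"
  have fX: "finite X" unfolding X_def by (intro finite_cartesian_product finite_lists_length_le) auto
  have "SS m k \<subseteq> {R. set R \<subseteq> X \<and> length R \<le> m}"
  proof
    fix R assume "R \<in> SS m k"
    then have V: "valid m R" by (simp add: SS_def)
    then have le: "length (elems R) = m"
      using distinct_card[of "elems R"] by (auto simp: valid_def)
    have "length R \<le> m" using length_le_elems[of R] V le by (auto simp: valid_def)
    moreover have "set R \<subseteq> X"
    proof
      fix c assume c: "c \<in> set R"
      then have "set (fst c) \<subseteq> {1..m}" using V in_elems[OF c] by (auto simp: valid_def)
      moreover have "length (fst c) \<le> m" using run_le_elems[OF c] le by simp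
      ultimately show "c \<in> X" unfolding X_def by (cases c) auto
    qed
    ultimately show "R \<in> {R. set R \<subseteq> X \<and> length R \<le> m}" by blast
  qed
  moreover have "finite {R. set R \<subseteq> X \<and> length R \<le> m}" by (rule finite_lists_length_le[OF fX])
  ultimately show ?thesis by (rule finite_subset)
qed

context fixes a b r s t u p q v w :: "'a::comm_ring_1" begin

abbreviation "WT \<equiv> wt a b r s t u p q v w"
abbreviation "MN \<equiv> mnm a b r s t u p q v w"

definition MM :: "nat \<Rightarrow> nat \<Rightarrow> 'a" where "MM m k = (\<Sum>R\<in>SS m k. WT R)"

lemma sum_new:
  "(\<Sum>R'\<in>{R'\<in>SS (Suc m) (h + (if ob then 1 else 0)). clsL (Suc m) R' = (True, \<not> ob)}. WT R')
   = MM m h * (\<Sum>i\<le>h. MN (True, \<not> ob) i (h - i))"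
proof -
  define c where "c = ([Suc m], ob)"
  have "MM m h * (\<Sum>i\<le>h. MN (True, \<not> ob) i (h - i)) =
     (\<Sum>R\<in>SS m h. \<Sum>i\<le>h. WT R * MN (True, \<not> ob) i (h - i))"
    by (simp add: MM_def sum_distrib_left sum_distrib_right) (rule sum.swap)
  also have "\<dots> = (\<Sum>x\<in>SS m h \<times> {..h}. WT (fst x) * MN (True, \<not> ob) (snd x) (h - snd x))"
    by (simp add: sum.cartesian_product case_prod_beta)
  also have "\<dots> = (\<Sum>R'\<in>{R'\<in>SS (Suc m) (h + (if ob then 1 else 0)). clsL (Suc m) R' = (True, \<not> ob)}. WT R')"
  proof (rule sum.reindex_bij_witness[where j = "\<lambda>x. ins_run (snd x) c (fst x)"
        and i = "\<lambda>R'. (rem (Suc m) R', lsgL (Suc m) R')"])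
    fix x assume x: "x \<in> SS m h \<times> {..h}"
    obtain R i where xe: "x = (R, i)" by (cases x)
    have V: "valid m R" and nR: "nopen R = h" and ih: "i \<le> h" using x xe by (auto simp: SS_def)
    obtain A B where AB: "R = A @ B" "nopen A = i" "A = [] \<or> snd (last A)" "ins_run i c R = A @ c # B"
      using ins_run_split[of i R c] ih nR by auto
    have V': "valid (Suc m) (A @ ([] @ [Suc m], ob) # B)" using V1[of m A B ob] V AB by simp
    show "(rem (Suc m) (ins_run (snd x) c (fst x)), lsgL (Suc m) (ins_run (snd x) c (fst x))) = x"
      using rem_mid[OF V'] lsg_mid[OF V'] AB xe by (simp add: c_def)
    show "ins_run (snd x) c (fst x) \<in> {R'\<in>SS (Suc m) (h + (if ob then 1 else 0)). clsL (Suc m) R' = (True, \<not> ob)}"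
      using V' cls_of[OF V'] AB xe nR by (auto simp: SS_def c_def)
    show "WT (ins_run (snd x) c (fst x)) = WT (fst x) * MN (True, \<not> ob) (snd x) (h - snd x)"
    proof -
      have VAB: "valid m (A @ B)" using V AB by simp
      have nB: "nopen B = h - i" using nR AB by simp
      show ?thesis using W1[OF VAB, of a b r s t u p q v w ob] AB xe nB by (simp add: c_def)
    qed
  next
    fix R' assume R': "R' \<in> {R'\<in>SS (Suc m) (h + (if ob then 1 else 0)). clsL (Suc m) R' = (True, \<not> ob)}"
    then have V': "valid (Suc m) R'" and nR': "nopen R' = h + (if ob then 1 else 0)"
      and cl: "clsL (Suc m) R' = (True, \<not> ob)" by (auto simp: SS_def)
    obtain A ys ob' B where R'e: "R' = A @ (ys @ [Suc m], ob') # B" using decomp[OF V'] by blast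
    have "ys = []" "ob' = ob" using cls_of[of m A ys ob' B] V' cl R'e by auto
    then have R'e2: "R' = A @ ([] @ [Suc m], ob) # B" using R'e by simp
    have V3': "valid m (A @ B)" "A = [] \<or> snd (last A)" using V3[of m A ob B] V' R'e2 by auto
    have rm: "rem (Suc m) R' = A @ B" using rem_mid[of m A "[]" ob B] V' R'e2 by simp
    have ls: "lsgL (Suc m) R' = nopen A" using lsg_mid[of m A "[]" ob B] V' R'e2 by simp
    show "ins_run (snd (rem (Suc m) R', lsgL (Suc m) R')) c (fst (rem (Suc m) R', lsgL (Suc m) R')) = R'"
      using rm ls ins_run_of_split[OF V3'(2)] R'e2 by (simp add: c_def)
    have "nopen (A @ B) = h" using nR' R'e2 by (cases ob) simp_all
    then show "(rem (Suc m) R', lsgL (Suc m) R') \<in> SS m h \<times> {..h}"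
      using rm ls V3' by (auto simp: SS_def)
  qed
  finally show ?thesis by simp
qed

lemma sum_ext:
  "(\<Sum>R'\<in>{R'\<in>SS (Suc m) k. clsL (Suc m) R' = (False, \<not> ob)}. WT R')
   = MM m (k + (if ob then 0 else 1)) *
     (\<Sum>i<k + (if ob then 0 else 1). MN (False, \<not> ob) i (k + (if ob then 0 else 1) - 1 - i))"
proof -
  define h where "h = k + (if ob then 0 else 1)"
  define f where "f = (\<lambda>d::nat list \<times> bool. (fst d @ [Suc m], ob))"
  have "MM m h * (\<Sum>i<h. MN (False, \<not> ob) i (h - 1 - i)) =
     (\<Sum>R\<in>SS m h. \<Sum>i<h. WT R * MN (False, \<not> ob) i (h - 1 - i))"
    by (simp add: MM_def sum_distrib_left sum_distrib_right) (rule sum.swap)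
  also have "\<dots> = (\<Sum>x\<in>SS m h \<times> {..<h}. WT (fst x) * MN (False, \<not> ob) (snd x) (h - 1 - snd x))"
    by (simp add: sum.cartesian_product case_prod_beta)
  also have "\<dots> = (\<Sum>R'\<in>{R'\<in>SS (Suc m) k. clsL (Suc m) R' = (False, \<not> ob)}. WT R')"
  proof (rule sum.reindex_bij_witness[where j = "\<lambda>x. app_open (snd x) f (fst x)"
        and i = "\<lambda>R'. (rem (Suc m) R', lsgL (Suc m) R')"])
    fix x assume x: "x \<in> SS m h \<times> {..<h}"
    obtain R i where xe: "x = (R, i)" by (cases x)
    have V: "valid m R" and nR: "nopen R = h" and ih: "i < h" using x xe by (auto simp: SS_def)
    obtain A d B where AB: "R = A @ d # B" "snd d" "nopen A = i" "app_open i f R = A @ f d # B"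
      using app_open_split[of i R f] ih nR by auto
    obtain ys where de: "d = (ys, True)" using AB(2) by (cases d) auto
    have ysne: "ys \<noteq> []" using V AB de by (auto simp: valid_def)
    have VR: "valid m (A @ (ys, True) # B)" using V AB de by simp
    have V': "valid (Suc m) (A @ (ys @ [Suc m], ob) # B)" using V2[OF VR] .
    have ie: "app_open (snd x) f (fst x) = A @ (ys @ [Suc m], ob) # B" using AB xe de by (simp add: f_def)
    show "(rem (Suc m) (app_open (snd x) f (fst x)), lsgL (Suc m) (app_open (snd x) f (fst x))) = x"
      using rem_mid[OF V'] lsg_mid[OF V'] AB xe de ysne ie by simp
    show "app_open (snd x) f (fst x) \<in> {R'\<in>SS (Suc m) k. clsL (Suc m) R' = (False, \<not> ob)}"
      using V' cls_of[OF V'] ie AB de nR ysne by (auto simp: SS_def h_def)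
    show "WT (app_open (snd x) f (fst x)) = WT (fst x) * MN (False, \<not> ob) (snd x) (h - 1 - snd x)"
    proof -
      have nB: "nopen B = h - 1 - i" using nR AB de by simp
      show ?thesis using W2[OF VR, of a b r s t u p q v w ob] ie AB xe de nB by simp
    qed
  next
    fix R' assume R': "R' \<in> {R'\<in>SS (Suc m) k. clsL (Suc m) R' = (False, \<not> ob)}"
    then have V': "valid (Suc m) R'" and nR': "nopen R' = k"
      and cl: "clsL (Suc m) R' = (False, \<not> ob)" by (auto simp: SS_def)
    obtain A ys ob' B where R'e: "R' = A @ (ys @ [Suc m], ob') # B" using decomp[OF V'] by blast
    have ysne: "ys \<noteq> []" and "ob' = ob" using cls_of[of m A ys ob' B] V' cl R'e by auto
    then have R'e2: "R' = A @ (ys @ [Suc m], ob) # B" using R'e by simp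
    have V4': "valid m (A @ (ys, True) # B)" using V4[of m A ys ob B] V' R'e2 ysne by auto
    have rm: "rem (Suc m) R' = A @ (ys, True) # B" using rem_mid[of m A ys ob B] V' R'e2 ysne by simp
    have ls: "lsgL (Suc m) R' = nopen A" using lsg_mid[of m A ys ob B] V' R'e2 by simp
    show "app_open (snd (rem (Suc m) R', lsgL (Suc m) R')) f (fst (rem (Suc m) R', lsgL (Suc m) R')) = R'"
      using rm ls app_open_of_split[of "(ys, True)" A f B] R'e2 by (simp add: f_def)
    have "nopen (A @ (ys, True) # B) = h" using nR' R'e2 by (cases ob) (simp_all add: h_def)
    then show "(rem (Suc m) R', lsgL (Suc m) R') \<in> SS m h \<times> {..<h}"
      using rm ls V4' by (auto simp: SS_def)
  qed
  finally show ?thesis by (simp add: h_def)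
qed

end

context fixes a b r s t u p q v w :: "'a::comm_ring_1" begin

abbreviation "MMx \<equiv> MM a b r s t u p q v w"

lemma class_op_pos:
  assumes "valid (Suc m) R'" "clsL (Suc m) R' = (True, False)"
  shows "0 < nopen R'"
proof -
  obtain A ys ob' B where R'e: "R' = A @ (ys @ [Suc m], ob') # B" using decomp[OF assms(1)] by blast
  have "ob'" using cls_of[of m A ys ob' B] assms R'e by auto
  then show ?thesis using R'e by simp
qed

lemma MM_Suc: "MMx (Suc m) k = MMx m k * (a * qbr r s (k + 1))
   + (if k = 0 then 0 else MMx m (k - 1) * (a * qbr p q k))
   + MMx m k * (b * qbr t u k) + MMx m (k + 1) * (b * qbr v w (k + 1))"
proof -
  define F where "F y = (\<Sum>R'\<in>{R'\<in>SS (Suc m) k. clsL (Suc m) R' = y}. WT a b r s t u p q v w R')" for y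
  have "(\<Sum>y\<in>UNIV. F y) = MMx (Suc m) k"
    unfolding MM_def F_def
    by (rule sum.group) (simp_all add: finite_SS)
  then have "MMx (Suc m) k = (\<Sum>y\<in>UNIV. F y)" by simp
  also have "\<dots> = F (True, True) + F (True, False) + F (False, False) + F (False, True)"
  proof -
    have U: "(UNIV :: (bool \<times> bool) set) = {(True, True), (True, False), (False, False), (False, True)}"
      by auto
    show ?thesis by (subst U) (simp add: add.assoc)
  qed
  also have "F (True, True) = MMx m k * (a * qbr r s (k + 1))"
  proof -
    have "F (True, True) = MMx m k * (\<Sum>i\<le>k. MN a b r s t u p q v w (True, True) i (k - i))"
      using sum_new[of a b r s t u p q v w m k False] by (simp add: F_def)
    also have "(\<Sum>i\<le>k. MN a b r s t u p q v w (True, True) i (k - i)) = a * (\<Sum>i<Suc k. r ^ i * s ^ (Suc k - 1 - i))"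
      unfolding lessThan_Suc_atMost sum_distrib_left by (rule sum.cong) (simp_all add: mnm_def)
    finally show ?thesis by (simp only: qbr_sum Suc_eq_plus1)
  qed
  also have "F (True, False) = (if k = 0 then 0 else MMx m (k - 1) * (a * qbr p q k))"
  proof (cases k)
    case 0
    have "{R'\<in>SS (Suc m) k. clsL (Suc m) R' = (True, False)} = {}"
    proof (rule equals0I)
      fix R' assume "R' \<in> {R'\<in>SS (Suc m) k. clsL (Suc m) R' = (True, False)}"
      then have "valid (Suc m) R'" "nopen R' = 0" "clsL (Suc m) R' = (True, False)"
        using 0 by (auto simp: SS_def)
      then show False using class_op_pos by fastforce
    qed
    then have "F (True, False) = 0" unfolding F_def by (simp only: sum.empty)
    then show ?thesis using 0 by simp
  next
    case (Suc h)
    have "F (True, False) = MMx m h * (\<Sum>i\<le>h. MN a b r s t u p q v w (True, False) i (h - i))"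
      using sum_new[of a b r s t u p q v w m h True] Suc by (simp add: F_def)
    also have "(\<Sum>i\<le>h. MN a b r s t u p q v w (True, False) i (h - i)) = a * (\<Sum>i<Suc h. p ^ i * q ^ (Suc h - 1 - i))"
      unfolding lessThan_Suc_atMost sum_distrib_left by (rule sum.cong) (simp_all add: mnm_def)
    finally show ?thesis unfolding qbr_sum using Suc by simp
  qed
  also have "F (False, False) = MMx m k * (b * qbr t u k)"
  proof -
    have "F (False, False) = MMx m k * (\<Sum>i<k. MN a b r s t u p q v w (False, False) i (k - 1 - i))"
      using sum_ext[of a b r s t u p q v w m k True] by (simp add: F_def)
    also have "(\<Sum>i<k. MN a b r s t u p q v w (False, False) i (k - 1 - i)) = b * (\<Sum>i<k. t ^ i * u ^ (k - 1 - i))"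
      unfolding sum_distrib_left by (rule sum.cong) (simp_all add: mnm_def)
    finally show ?thesis by (simp only: qbr_sum)
  qed
  also have "F (False, True) = MMx m (k + 1) * (b * qbr v w (k + 1))"
  proof -
    have "F (False, True) = MMx m (k + 1) * (\<Sum>i<k + 1. MN a b r s t u p q v w (False, True) i (k + 1 - 1 - i))"
      using sum_ext[of a b r s t u p q v w m k False] by (simp add: F_def)
    also have "(\<Sum>i<k + 1. MN a b r s t u p q v w (False, True) i (k + 1 - 1 - i)) = b * (\<Sum>i<k + 1. v ^ i * w ^ (k + 1 - 1 - i))"
      unfolding sum_distrib_left by (rule sum.cong) (simp_all add: mnm_def)
    finally show ?thesis by (simp only: qbr_sum)
  qed
  finally show ?thesis .
qed

lemma SS0: "SS 0 k = (if k = 0 then {[]} else {})"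
proof -
  have "valid 0 R \<longleftrightarrow> R = []" for R
  proof
    assume V: "valid 0 R"
    then have "elems R = []" by (auto simp: valid_def)
    then have "length R \<le> 0" using length_le_elems[of R] V by (auto simp: valid_def)
    then show "R = []" by simp
  qed (simp add: valid_def)
  then have "SS 0 k = {R. R = [] \<and> nopen R = k}" unfolding SS_def by simp
  also have "\<dots> = (if k = 0 then {[]} else {})" by (cases k) auto
  finally show ?thesis .
qed

definition gg :: "nat \<Rightarrow> 'a" where "gg k = (\<Prod>i<k. a * qbr p q (Suc i))"

lemma MM_nu: "MMx m k = nu a b r s t u p q v w m k * gg k"
proof (induction m arbitrary: k)
  case 0
  show ?case by (simp add: MM_def SS0 wt_def gg_def)
next
  case (Suc m)
  have g1: "gg (Suc j) = gg j * (a * qbr p q (Suc j))" for j by (simp add: gg_def)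
  have g0: "gg 0 = 1" by (simp add: gg_def)
  show ?case
  proof (cases k)
    case 0
    have "MMx (Suc m) k = MMx m 0 * (a * qbr r s 1) + MMx m 0 * (b * qbr t u 0) + MMx m 1 * (b * qbr v w 1)"
      using MM_Suc[of m k] 0 by simp
    also have "\<dots> = nu a b r s t u p q v w m 0 * (a * qbr r s 1) + nu a b r s t u p q v w m 0 * (b * qbr t u 0)
        + nu a b r s t u p q v w m 1 * (gg 0 * (a * qbr p q 1)) * (b * qbr v w 1)"
      unfolding Suc.IH by (simp add: g0 g1)
    also have "\<dots> = nu a b r s t u p q v w (Suc m) k * gg k"
      using 0 by (simp add: g0 bcoef_def lcoef_def algebra_simps)
    finally show ?thesis .
  next
    case (Suc j)
    have "MMx (Suc m) k = MMx m (Suc j) * (a * qbr r s (Suc j + 1)) + MMx m j * (a * qbr p q (Suc j))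
       + MMx m (Suc j) * (b * qbr t u (Suc j)) + MMx m (Suc j + 1) * (b * qbr v w (Suc j + 1))"
      using MM_Suc[of m k] Suc by simp
    also have "\<dots> = nu a b r s t u p q v w m (Suc j) * gg (Suc j) * (a * qbr r s (Suc j + 1))
       + nu a b r s t u p q v w m j * gg j * (a * qbr p q (Suc j))
       + nu a b r s t u p q v w m (Suc j) * gg (Suc j) * (b * qbr t u (Suc j))
       + nu a b r s t u p q v w m (Suc j + 1) * (gg (Suc j) * (a * qbr p q (Suc (Suc j)))) * (b * qbr v w (Suc j + 1))"
      unfolding Suc.IH by (simp only: g1 Suc_eq_plus1[symmetric])
    also have "\<dots> = nu a b r s t u p q v w (Suc m) k * gg k"
      unfolding Suc by (simp add: g1[of j] bcoef_def lcoef_def algebra_simps)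
    finally show ?thesis .
  qed
qed

end

lemma RE:
  assumes "i < length w"
  shows "i \<le> run_end_of w i" "run_end w (run_end_of w i)" "run_end_of w i < length w"
    "\<And>j. i \<le> j \<Longrightarrow> run_end w j \<Longrightarrow> run_end_of w i \<le> j"
proof -
  have ex: "i \<le> length w - 1 \<and> run_end w (length w - 1)"
    using assms by (auto simp: run_end_def)
  have L: "i \<le> run_end_of w i \<and> run_end w (run_end_of w i)"
    unfolding run_end_of_def by (rule LeastI[of _ "length w - 1"]) (rule ex)
  then show "i \<le> run_end_of w i" "run_end w (run_end_of w i)" by auto
  then show "run_end_of w i < length w" by (auto simp: run_end_def)
  show "\<And>j. i \<le> j \<Longrightarrow> run_end w j \<Longrightarrow> run_end_of w i \<le> j"
    unfolding run_end_of_def by (rule Least_le) simp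
qed

locale split_word =
  fixes ys zs :: "nat list"
  assumes ne: "ys \<noteq> []" and so: "sorted_wrt (<) ys" and bd: "zs = [] \<or> hd zs < last ys"
begin

abbreviation "n \<equiv> length ys"
abbreviation "\<sigma> \<equiv> ys @ zs"

lemma n_pos: "0 < n" using ne by simp

lemma ys_lt: "i < j \<Longrightarrow> j < n \<Longrightarrow> ys ! i < ys ! j"
  using so by (simp add: sorted_wrt_iff_nth_less)

lemma bnd: "zs \<noteq> [] \<Longrightarrow> ys ! (n - 1) > zs ! 0"
  using bd ne by (simp add: last_conv_nth hd_conv_nth)

lemma P1: "run_start \<sigma> i \<longleftrightarrow> i = 0 \<or> (n \<le> i \<and> run_start zs (i - n))"
proof (cases "i = 0")
  case True
  then show ?thesis using ne by (simp add: run_start_def)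
next
  case False
  show ?thesis
  proof (cases "i < n")
    case True
    then have "ys ! (i - 1) < ys ! i" using False ys_lt[of "i - 1" i] by simp
    moreover have "i - 1 < n" using True by simp
    ultimately show ?thesis using True False by (simp add: run_start_def nth_append)
  next
    case ge: False
    show ?thesis
    proof (cases "i = n")
      case True
      then show ?thesis using False bnd by (auto simp: run_start_def nth_append)
    next
      case False
      then have "n \<le> i - 1" "i - 1 - n = i - n - 1" using ge by auto
      then show ?thesis using ge \<open>i \<noteq> 0\<close> False by (auto simp: run_start_def nth_append)
    qed
  qed
qed

lemma P2: "run_end \<sigma> i \<longleftrightarrow> i = n - 1 \<or> (n \<le> i \<and> run_end zs (i - n))"
proof (cases "i < n - 1")
  case True
  then have "ys ! i < ys ! Suc i" using ys_lt[of i "Suc i"] by simp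
  then show ?thesis using True by (auto simp: run_end_def nth_append)
next
  case False
  show ?thesis
  proof (cases "i = n - 1")
    case True
    have "n - 1 < n + length zs" using n_pos by linarith
    then show ?thesis using bnd n_pos True
      by (cases "zs = []") (auto simp: run_end_def nth_append)
  next
    case False
    then have ge: "n \<le> i" using \<open>\<not> i < n - 1\<close> by simp
    have e1: "\<sigma> ! i = zs ! (i - n)" "\<sigma> ! Suc i = zs ! Suc (i - n)"
      using ge by (simp_all add: nth_append Suc_diff_le)
    have e2: "i < length \<sigma> \<longleftrightarrow> i - n < length zs" "Suc i = length \<sigma> \<longleftrightarrow> Suc (i - n) = length zs"
      using ge by auto
    have "run_end \<sigma> i \<longleftrightarrow> run_end zs (i - n)"
      unfolding run_end_def e1 e2 ..
    then show ?thesis using ge False by simp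
  qed
qed

lemma P3a: "i < n \<Longrightarrow> run_end_of \<sigma> i = n - 1"
  unfolding run_end_of_def
proof (rule Least_equality)
  assume "i < n"
  then show "i \<le> n - 1 \<and> run_end \<sigma> (n - 1)" using P2 by simp
next
  fix j assume "i < n" "i \<le> j \<and> run_end \<sigma> j"
  then show "n - 1 \<le> j" using P2[of j] by auto
qed

lemma P3b:
  assumes "n \<le> i" "i < length \<sigma>"
  shows "run_end_of \<sigma> i = n + run_end_of zs (i - n)"
proof -
  have izs: "i - n < length zs" using assms by simp
  note re = RE[OF izs]
  show ?thesis
    unfolding run_end_of_def[of \<sigma>]
  proof (rule Least_equality)
    show "i \<le> n + run_end_of zs (i - n) \<and> run_end \<sigma> (n + run_end_of zs (i - n))"
      using re(1,2) assms P2[of "n + run_end_of zs (i - n)"] by auto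
  next
    fix j assume j: "i \<le> j \<and> run_end \<sigma> j"
    then have "n \<le> j" using assms by simp
    moreover have "j \<noteq> n - 1" using \<open>n \<le> j\<close> n_pos by linarith
    ultimately have "run_end zs (j - n)" using j P2[of j] by simp
    moreover have "i - n \<le> j - n" using j by (simp add: diff_le_mono)
    ultimately have "run_end_of zs (i - n) \<le> j - n" using re(4)[of "j - n"] by blast
    then show "n + run_end_of zs (i - n) \<le> j" using \<open>n \<le> j\<close> by simp
  qed
qed

lemma P4a: "run_elems \<sigma> 0 = set ys"
proof -
  have "run_elems \<sigma> 0 = {\<sigma> ! j | j. j \<le> n - 1}"
    unfolding run_elems_def using P3a[of 0] n_pos by simp
  also have "\<dots> = {ys ! j | j. j < n}"
    using n_pos by (metis (no_types, lifting) Suc_pred' less_Suc_eq_le nth_append)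
  also have "\<dots> = set ys" by (auto simp: in_set_conv_nth)
  finally show ?thesis .
qed

lemma P4b:
  assumes "n \<le> i" "i < length \<sigma>"
  shows "run_elems \<sigma> i = run_elems zs (i - n)"
proof -
  have e: "run_end_of \<sigma> i = n + run_end_of zs (i - n)" using P3b[OF assms] .
  show ?thesis
    unfolding run_elems_def e
  proof (intro equalityI subsetI)
    fix x assume "x \<in> {\<sigma> ! j |j. i \<le> j \<and> j \<le> n + run_end_of zs (i - n)}"
    then obtain j where j: "x = \<sigma> ! j" "i \<le> j" "j \<le> n + run_end_of zs (i - n)" by blast
    then have "x = zs ! (j - n)" "i - n \<le> j - n" "j - n \<le> run_end_of zs (i - n)"
      using assms by (auto simp: nth_append)
    then show "x \<in> {zs ! j |j. i - n \<le> j \<and> j \<le> run_end_of zs (i - n)}" by blast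
  next
    fix x assume "x \<in> {zs ! j |j. i - n \<le> j \<and> j \<le> run_end_of zs (i - n)}"
    then obtain j where j: "x = zs ! j" "i - n \<le> j" "j \<le> run_end_of zs (i - n)" by blast
    then have "x = \<sigma> ! (j + n)" "i \<le> j + n" "j + n \<le> n + run_end_of zs (i - n)"
      using assms by (auto simp: nth_append)
    then show "x \<in> {\<sigma> ! j |j. i \<le> j \<and> j \<le> n + run_end_of zs (i - n)}" by blast
  qed
qed

lemma strad0: "straddles \<sigma> 0 x \<longleftrightarrow> part x (ys, False)"
  unfolding straddles_def P4a part_def by simp

lemma strad_shift: "run_start zs st \<Longrightarrow> straddles \<sigma> (st + n) x \<longleftrightarrow> straddles zs st x"
proof -
  assume "run_start zs st"
  then have "st < length zs" by (simp add: run_start_def)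
  then show ?thesis unfolding straddles_def using P4b[of "st + n"] by simp
qed

lemma rs_lt: "run_start w i \<Longrightarrow> i < length w"
  by (simp add: run_start_def)

lemma SetSplit:
  "{st. run_start \<sigma> st \<and> Q st} =
     (if Q 0 then {0} else {}) \<union> (\<lambda>st'. st' + n) ` {st'. run_start zs st' \<and> Q (st' + n)}"
proof (intro equalityI subsetI)
  fix st assume "st \<in> {st. run_start \<sigma> st \<and> Q st}"
  then have st: "run_start \<sigma> st" "Q st" by auto
  show "st \<in> (if Q 0 then {0} else {}) \<union> (\<lambda>st'. st' + n) ` {st'. run_start zs st' \<and> Q (st' + n)}"
  proof (cases "st = 0")
    case True
    then show ?thesis using st by simp
  next
    case False
    then have "n \<le> st" "run_start zs (st - n)" using st P1 by auto
    moreover have "st = (st - n) + n" using \<open>n \<le> st\<close> by simp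
    ultimately show ?thesis using st(2) by (intro UnI2) (auto intro!: image_eqI[of _ _ "st - n"])
  qed
next
  fix st assume "st \<in> (if Q 0 then {0} else {}) \<union> (\<lambda>st'. st' + n) ` {st'. run_start zs st' \<and> Q (st' + n)}"
  then show "st \<in> {st. run_start \<sigma> st \<and> Q st}"
  proof
    assume "st \<in> (if Q 0 then {0} else {})"
    then show ?thesis using P1 by (auto split: if_splits)
  next
    assume "st \<in> (\<lambda>st'. st' + n) ` {st'. run_start zs st' \<and> Q (st' + n)}"
    then obtain st' where "st = st' + n" "run_start zs st'" "Q (st' + n)" by auto
    then show ?thesis using P1[of st] by simp
  qed
qed

lemma card_split:
  "card {st. run_start \<sigma> st \<and> Q st} = (if Q 0 then 1 else 0) + card {st'. run_start zs st' \<and> Q (st' + n)}"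
proof -
  have fin: "finite {st'. run_start zs st' \<and> Q (st' + n)}"
    by (rule finite_subset[of _ "{..<length zs}"]) (auto simp: run_start_def)
  have inj: "inj_on (\<lambda>st'. st' + n) X" for X by (auto simp: inj_on_def)
  have disj: "(if Q 0 then {0} else {}) \<inter> (\<lambda>st'. st' + n) ` {st'. run_start zs st' \<and> Q (st' + n)} = {}"
    using n_pos by auto
  show ?thesis unfolding SetSplit
    by (subst card_Un_disjoint) (use fin disj in \<open>auto simp: card_image[OF inj]\<close>)
qed

end

definition goodF :: "st \<Rightarrow> bool" where
  "goodF R \<longleftrightarrow> (\<forall>c\<in>set R. fst c \<noteq> [] \<and> sorted_wrt (<) (fst c) \<and> \<not> snd c) \<and>
      successively Pv R \<and> distinct (elems R)"

lemma goodF_Cons: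
  assumes "goodF (c # R)"
  shows "goodF R" "split_word (fst c) (elems R)" "c = (fst c, False)" "distinct (fst c)"
    "set (fst c) \<inter> set (elems R) = {}"
proof -
  show "goodF R" using assms by (auto simp: goodF_def successively_Cons)
  show "c = (fst c, False)" using assms by (cases c) (auto simp: goodF_def)
  show "distinct (fst c)" "set (fst c) \<inter> set (elems R) = {}" using assms by (auto simp: goodF_def)
  have "elems R = [] \<or> hd (elems R) < last (fst c)"
  proof (cases R)
    case (Cons d R')
    then have "Pv c d" "fst d \<noteq> []" "\<not> snd c" using assms by (auto simp: goodF_def successively_Cons)
    then show ?thesis using Cons by simp
  qed simp
  then show "split_word (fst c) (elems R)"
    using assms by (unfold_locales) (auto simp: goodF_def)
qed

lemma C_count: "goodF R \<Longrightarrow> card {st. run_start (elems R) st \<and> straddles (elems R) st x} = nparts x R"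
proof (induction R)
  case Nil
  then show ?case by (simp add: run_start_def)
next
  case (Cons c R)
  note g = goodF_Cons[OF Cons.prems]
  interpret sw: split_word "fst c" "elems R" by (rule g(2))
  have "card {st. run_start (elems (c # R)) st \<and> straddles (elems (c # R)) st x} =
     (if straddles (elems (c # R)) 0 x then 1 else 0) +
     card {st'. run_start (elems R) st' \<and> straddles (elems (c # R)) (st' + length (fst c)) x}"
    using sw.card_split[of "\<lambda>st. straddles (elems (c # R)) st x"] by simp
  also have "{st'. run_start (elems R) st' \<and> straddles (elems (c # R)) (st' + length (fst c)) x} =
      {st'. run_start (elems R) st' \<and> straddles (elems R) st' x}"
    using sw.strad_shift by auto
  also have "straddles (elems (c # R)) 0 x \<longleftrightarrow> part x c"
    using sw.strad0 g(3) by (metis elems_simps(2))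
  finally show ?case using Cons.IH[OF g(1)] by simp
qed

lemma E_pos:
  assumes "goodF R" "k < length (elems R)"
  shows "run_start (elems R) k = fst (clsL (elems R ! k) R) \<and>
         run_end (elems R) k = snd (clsL (elems R ! k) R) \<and>
         lsg (elems R) k = lsgL (elems R ! k) R \<and> rsg (elems R) k = rsgL (elems R ! k) R"
  using assms
proof (induction R arbitrary: k)
  case Nil
  then show ?case by simp
next
  case (Cons c R)
  note g = goodF_Cons[OF Cons.prems(1)]
  interpret sw: split_word "fst c" "elems R" by (rule g(2))
  define ys where "ys = fst c"
  define zs where "zs = elems R"
  define n where "n = length ys"
  have el: "elems (c # R) = ys @ zs" by (simp add: ys_def zs_def)
  have npos: "0 < n" using sw.n_pos by (simp add: n_def ys_def)
  show ?case
  proof (cases "k < n")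
    case True
    define x where "x = ys ! k"
    have xe: "elems (c # R) ! k = x" unfolding el using True by (simp add: x_def n_def nth_append)
    have xe2: "(ys @ zs) ! k = x" using xe el by simp
    have xin: "x \<in> set ys" using True by (simp add: x_def n_def)
    have dys: "distinct ys" using g(4) by (simp add: ys_def)
    have hd: "x = hd ys \<longleftrightarrow> k = 0"
      using dys True npos by (simp add: x_def n_def hd_conv_nth nth_eq_iff_index_eq)
    have lst: "x = last ys \<longleftrightarrow> k = n - 1"
      using dys True npos by (simp add: x_def n_def last_conv_nth nth_eq_iff_index_eq)
    have cls: "clsL x (c # R) = (k = 0, k = n - 1)"
      using xin hd lst g(3) by (simp add: ys_def) (metis snd_conv)
    have rs: "run_start (elems (c # R)) k \<longleftrightarrow> k = 0"
      using sw.P1[of k] True by (simp add: ys_def zs_def n_def)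
    have re: "run_end (elems (c # R)) k \<longleftrightarrow> k = n - 1"
      using sw.P2[of k] True by (simp add: ys_def zs_def n_def)
    have lsg0: "lsg (elems (c # R)) k = 0"
    proof -
      have "lsg (elems (c # R)) k = (if run_end_of (ys @ zs) 0 < k \<and> straddles (ys @ zs) 0 x then 1 else 0) +
        card {st'. run_start zs st' \<and> run_end_of (ys @ zs) (st' + n) < k \<and> straddles (ys @ zs) (st' + n) x}"
        unfolding lsg_def el xe2 using sw.card_split[of "\<lambda>st. run_end_of (ys @ zs) st < k \<and> straddles (ys @ zs) st x"]
        by (simp add: ys_def zs_def n_def)
      also have "run_end_of (ys @ zs) 0 = n - 1" using sw.P3a npos by (simp add: ys_def zs_def n_def)
      also have "{st'. run_start zs st' \<and> run_end_of (ys @ zs) (st' + n) < k \<and> straddles (ys @ zs) (st' + n) x} = {}"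
      proof (rule equals0I)
        fix st' assume a: "st' \<in> {st'. run_start zs st' \<and> run_end_of (ys @ zs) (st' + n) < k \<and> straddles (ys @ zs) (st' + n) x}"
        then have "st' + n < length (ys @ zs)" by (auto simp: run_start_def n_def)
        then have "st' + n \<le> run_end_of (ys @ zs) (st' + n)" by (rule RE(1))
        then show False using a True by auto
      qed
      moreover have "\<not> (n - 1 < k)" using True by linarith
      ultimately show ?thesis by simp
    qed
    have rsgv: "rsg (elems (c # R)) k = nparts x R"
    proof -
      have "rsg (elems (c # R)) k = (if k < 0 \<and> straddles (ys @ zs) 0 x then 1 else 0) +
        card {st'. run_start zs st' \<and> k < st' + n \<and> straddles (ys @ zs) (st' + n) x}"
        unfolding rsg_def el xe2 using sw.card_split[of "\<lambda>st. k < st \<and> straddles (ys @ zs) st x"]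
        by (simp add: ys_def zs_def n_def)
      also have "{st'. run_start zs st' \<and> k < st' + n \<and> straddles (ys @ zs) (st' + n) x} =
          {st'. run_start zs st' \<and> straddles zs st' x}"
        using sw.strad_shift True by (auto simp: ys_def zs_def n_def)
      finally show ?thesis using C_count[OF g(1)] by (simp add: zs_def)
    qed
    show ?thesis unfolding xe using cls rs re lsg0 rsgv xin by (simp add: ys_def)
  next
    case False
    define k' where "k' = k - n"
    have k'l: "k' < length zs" using Cons.prems(2) False unfolding el by (simp add: k'_def n_def)
    define x where "x = zs ! k'"
    have xe: "elems (c # R) ! k = x" unfolding el using False by (simp add: x_def n_def k'_def nth_append)
    have xe2: "(ys @ zs) ! k = x" using xe el by simp
    have xn: "x \<notin> set ys" using g(5) k'l by (auto simp: x_def ys_def zs_def)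
    have IH: "run_start zs k' = fst (clsL x R) \<and> run_end zs k' = snd (clsL x R) \<and>
        lsg zs k' = lsgL x R \<and> rsg zs k' = rsgL x R"
      using Cons.IH[OF g(1), of k'] k'l by (simp add: zs_def x_def)
    have cls: "clsL x (c # R) = clsL x R" using xn by (simp add: ys_def)
    have rs: "run_start (elems (c # R)) k \<longleftrightarrow> run_start zs k'"
      using sw.P1[of k] False npos by (simp add: ys_def zs_def n_def k'_def el)
    have kn1: "k \<noteq> length (fst c) - 1" using False npos unfolding n_def ys_def by linarith
    have re: "run_end (elems (c # R)) k \<longleftrightarrow> run_end zs k'"
      using sw.P2[of k] False kn1 by (simp add: ys_def zs_def n_def k'_def el)
    have lsgv: "lsg (elems (c # R)) k = (if part x c then 1 else 0) + lsg zs k'"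
    proof -
      have "lsg (elems (c # R)) k = (if run_end_of (ys @ zs) 0 < k \<and> straddles (ys @ zs) 0 x then 1 else 0) +
        card {st'. run_start zs st' \<and> run_end_of (ys @ zs) (st' + n) < k \<and> straddles (ys @ zs) (st' + n) x}"
        unfolding lsg_def el xe2 using sw.card_split[of "\<lambda>st. run_end_of (ys @ zs) st < k \<and> straddles (ys @ zs) st x"]
        by (simp add: ys_def zs_def n_def)
      also have "run_end_of (ys @ zs) 0 = n - 1" using sw.P3a npos by (simp add: ys_def zs_def n_def)
      also have "straddles (ys @ zs) 0 x \<longleftrightarrow> part x c" using sw.strad0 g(3) by (simp add: ys_def zs_def)
      also have "{st'. run_start zs st' \<and> run_end_of (ys @ zs) (st' + n) < k \<and> straddles (ys @ zs) (st' + n) x} =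
          {st'. run_start zs st' \<and> run_end_of zs st' < k' \<and> straddles zs st' (zs ! k')}"
      proof (rule Collect_cong)
        fix st'
        show "(run_start zs st' \<and> run_end_of (ys @ zs) (st' + n) < k \<and> straddles (ys @ zs) (st' + n) x) =
          (run_start zs st' \<and> run_end_of zs st' < k' \<and> straddles zs st' (zs ! k'))"
        proof (cases "run_start zs st'")
          case True
          then have "st' < length zs" by (simp add: run_start_def)
          then have "run_end_of (ys @ zs) (st' + n) = n + run_end_of zs st'"
            using sw.P3b[of "st' + n"] by (simp add: ys_def zs_def n_def)
          then show ?thesis using True sw.strad_shift[OF True[unfolded zs_def]] False
            by (simp add: ys_def zs_def n_def k'_def x_def) linarith
        qed simp
      qed
      moreover have "n - 1 < k" using npos False by linarith
      ultimately show ?thesis by (simp add: lsg_def)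
    qed
    have rsgv: "rsg (elems (c # R)) k = rsg zs k'"
    proof -
      have "rsg (elems (c # R)) k = (if k < 0 \<and> straddles (ys @ zs) 0 x then 1 else 0) +
        card {st'. run_start zs st' \<and> k < st' + n \<and> straddles (ys @ zs) (st' + n) x}"
        unfolding rsg_def el xe2 using sw.card_split[of "\<lambda>st. k < st \<and> straddles (ys @ zs) st x"]
        by (simp add: ys_def zs_def n_def)
      also have "{st'. run_start zs st' \<and> k < st' + n \<and> straddles (ys @ zs) (st' + n) x} =
          {st'. run_start zs st' \<and> k' < st' \<and> straddles zs st' (zs ! k')}"
        using sw.strad_shift False by (auto simp: ys_def zs_def n_def k'_def x_def)
      finally show ?thesis by (simp add: rsg_def)
    qed
    show ?thesis unfolding xe using IH cls rs re lsgv rsgv xn by (simp add: ys_def)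
  qed
qed

fun runsf :: "nat list \<Rightarrow> nat list list" where
  "runsf [] = []"
| "runsf [x] = [[x]]"
| "runsf (x # y # zs) = (if x < y then (x # hd (runsf (y # zs))) # tl (runsf (y # zs))
     else [x] # runsf (y # zs))"

lemma runsf_hd: "xs \<noteq> [] \<Longrightarrow> runsf xs \<noteq> [] \<and> hd (runsf xs) \<noteq> [] \<and> hd (hd (runsf xs)) = hd xs"
  by (induction xs rule: runsf.induct) auto

lemma runsf_concat: "concat (runsf xs) = xs"
proof (induction xs rule: runsf.induct)
  case (3 x y zs)
  have ne: "runsf (y # zs) \<noteq> []" using runsf_hd[of "y # zs"] by simp
  show ?case
  proof (cases "x < y")
    case True
    have "concat (runsf (x # y # zs)) = x # concat (hd (runsf (y # zs)) # tl (runsf (y # zs)))"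
      using True by simp
    also have "hd (runsf (y # zs)) # tl (runsf (y # zs)) = runsf (y # zs)" using ne by simp
    finally show ?thesis using 3 True by simp
  next
    case False
    then show ?thesis using 3 by simp
  qed
qed auto

lemma runsf_runs: "ys \<in> set (runsf xs) \<Longrightarrow> ys \<noteq> [] \<and> sorted_wrt (<) ys"
proof (induction xs arbitrary: ys rule: runsf.induct)
  case (3 x y zs)
  have ne: "runsf (y # zs) \<noteq> []" and h: "hd (runsf (y # zs)) \<noteq> []" "hd (hd (runsf (y # zs))) = y"
    using runsf_hd[of "y # zs"] by auto
  show ?case
  proof (cases "x < y")
    case True
    define Y where "Y = hd (runsf (y # zs))"
    have Yin: "Y \<in> set (runsf (y # zs))" using ne by (simp add: Y_def)
    then have sY: "sorted_wrt (<) Y" using "3.IH"(1)[OF True] by blast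
    have "\<forall>z\<in>set Y. x < z"
    proof
      fix z assume "z \<in> set Y"
      then have "z = hd Y \<or> hd Y < z" using sY h(1) unfolding Y_def
        by (cases "hd (runsf (y # zs))") auto
      then show "x < z" using True h(2) by (auto simp: Y_def)
    qed
    then have "sorted_wrt (<) (x # Y)" using sY by simp
    moreover have "ys = x # Y \<or> ys \<in> set (tl (runsf (y # zs)))" using "3.prems" True by (simp add: Y_def)
    moreover have "set (tl (runsf (y # zs))) \<subseteq> set (runsf (y # zs))" using ne by (cases "runsf (y # zs)") auto
    ultimately show ?thesis using "3.IH"(1)[OF True] by blast
  next
    case False
    then show ?thesis using 3 by auto
  qed
qed auto

lemma runsf_succ: "distinct xs \<Longrightarrow> successively (\<lambda>ys zs. hd zs < last ys) (runsf xs)"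
proof (induction xs rule: runsf.induct)
  case (3 x y zs)
  have ne: "runsf (y # zs) \<noteq> []" and h: "hd (runsf (y # zs)) \<noteq> []" "hd (hd (runsf (y # zs))) = y"
    using runsf_hd[of "y # zs"] by auto
  have IH: "successively (\<lambda>ys zs. hd zs < last ys) (runsf (y # zs))"
    using 3 by (cases "x < y") auto
  obtain Y Ys where RY: "runsf (y # zs) = Y # Ys" using ne by (cases "runsf (y # zs)") auto
  show ?case
  proof (cases "x < y")
    case True
    have "Y \<noteq> []" using h RY by simp
    then show ?thesis using True IH RY by (auto simp: successively_Cons)
  next
    case False
    then have "y < x" using "3.prems" by auto
    then show ?thesis using False IH RY h by (auto simp: successively_Cons)
  qed
qed auto

definition stR :: "nat list \<Rightarrow> st" where "stR xs = map (\<lambda>ys. (ys, False)) (runsf xs)"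

lemma elems_stR: "elems (stR xs) = xs"
  by (simp add: stR_def elems_def comp_def runsf_concat)

lemma perms_len: "\<sigma> \<in> perms n \<Longrightarrow> length \<sigma> = n"
  using distinct_card[of \<sigma>] by (auto simp: perms_def)

lemma stR_SS: "\<sigma> \<in> perms n \<Longrightarrow> stR \<sigma> \<in> SS n 0"
proof -
  assume P: "\<sigma> \<in> perms n"
  have "successively Pv (stR \<sigma>)"
    unfolding stR_def successively_map using runsf_succ[of \<sigma>] P by (simp add: perms_def)
  moreover have "\<forall>c\<in>set (stR \<sigma>). fst c \<noteq> [] \<and> sorted_wrt (<) (fst c)"
    using runsf_runs by (auto simp: stR_def)
  moreover have "nopen (stR \<sigma>) = 0" by (simp add: stR_def nopen_def)
  ultimately show ?thesis using P by (simp add: SS_def valid_def elems_stR perms_def)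
qed

lemma runsf_app:
  assumes "ys \<noteq> []" "sorted_wrt (<) ys" "zs = [] \<or> hd zs < last ys"
  shows "runsf (ys @ zs) = ys # runsf zs"
  using assms
proof (induction ys)
  case Nil
  then show ?case by simp
next
  case (Cons x ys')
  show ?case
  proof (cases ys')
    case Nil
    then show ?thesis using Cons.prems by (cases zs) auto
  next
    case (Cons x' ys'')
    have "x < x'" using Cons Cons.prems(2) by simp
    have "runsf (ys' @ zs) = ys' # runsf zs"
      using Cons.IH Cons.prems Cons by simp
    then show ?thesis using \<open>x < x'\<close> Cons by simp
  qed
qed

lemma SS_goodF: "R \<in> SS n 0 \<Longrightarrow> goodF R"
proof -
  assume "R \<in> SS n 0"
  then have V: "valid n R" and z: "length (filter snd R) = 0" by (auto simp: SS_def nopen_def)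
  then have "\<forall>c\<in>set R. \<not> snd c" by (simp add: filter_empty_conv)
  then show ?thesis using V by (auto simp: goodF_def valid_def)
qed

lemma runsf_elems: "goodF R \<Longrightarrow> runsf (elems R) = map fst R"
proof (induction R)
  case (Cons c R)
  note g = goodF_Cons[OF Cons.prems]
  interpret sw: split_word "fst c" "elems R" by (rule g(2))
  have "runsf (fst c @ elems R) = fst c # runsf (elems R)"
    by (rule runsf_app) (use sw.ne sw.so sw.bd in auto)
  then show ?case using Cons.IH[OF g(1)] by simp
qed simp

lemma stR_elems: "R \<in> SS n 0 \<Longrightarrow> stR (elems R) = R"
proof -
  assume R: "R \<in> SS n 0"
  then have g: "goodF R" by (rule SS_goodF)
  then have cl: "\<forall>c\<in>set R. \<not> snd c" by (simp add: goodF_def)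
  have "stR (elems R) = map (\<lambda>c. (fst c, False)) R"
    unfolding stR_def runsf_elems[OF g] by simp
  also have "\<dots> = R" using cl by (induction R) (auto simp: prod_eq_iff)
  finally show ?thesis .
qed

lemma prod_list_nth: "prod_list (map f xs) = (\<Prod>k<length xs. f (xs ! k))"
proof -
  have "map f xs = map (\<lambda>k. f (xs ! k)) [0..<length xs]"
    by (rule nth_equalityI) auto
  then show ?thesis
    by (simp add: prod.distinct_set_conv_list[symmetric] atLeast0LessThan)
qed

context fixes a b r s t u p q v w :: "'a::comm_ring_1" begin

lemma WT_pos: "R \<in> SS n 0 \<Longrightarrow>
  wt a b r s t u p q v w R = (\<Prod>k<length (elems R).
      mnm a b r s t u p q v w (run_start (elems R) k, run_end (elems R) k) (lsg (elems R) k) (rsg (elems R) k))"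
proof -
  assume R: "R \<in> SS n 0"
  have g: "goodF R" using SS_goodF[OF R] .
  show ?thesis
    unfolding wt_def prod_list_nth
  proof (rule prod.cong[OF refl])
    fix k assume "k \<in> {..<length (elems R)}"
    then have "k < length (elems R)" by simp
    from E_pos[OF g this] show "ew a b r s t u p q v w R (elems R ! k) =
      mnm a b r s t u p q v w (run_start (elems R) k, run_end (elems R) k) (lsg (elems R) k) (rsg (elems R) k)"
      by (simp add: ew_def)
  qed
qed

lemma powX: "(c::'a) ^ (\<Sum>k\<in>{k. k < length \<sigma> \<and> X \<sigma> k}. f k) = (\<Prod>k<length \<sigma>. if X \<sigma> k then c ^ f k else 1)"
proof -
  have e: "{k. k < length \<sigma> \<and> X \<sigma> k} = {k \<in> {..<length \<sigma>}. X \<sigma> k}" by auto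
  have "c ^ (\<Sum>k\<in>{k. k < length \<sigma> \<and> X \<sigma> k}. f k) = (\<Prod>k\<in>{k. k < length \<sigma> \<and> X \<sigma> k}. c ^ f k)"
    by (rule power_sum)
  also have "\<dots> = (\<Prod>k\<in>{k \<in> {..<length \<sigma>}. X \<sigma> k}. c ^ f k)" unfolding e ..
  also have "\<dots> = (\<Prod>k<length \<sigma>. if X \<sigma> k then c ^ f k else 1)" by (rule prod.inter_filter) simp
  finally show ?thesis .
qed

lemma Fz_pos:
  "r ^ lsgX is_sing \<sigma> * s ^ rsgX is_sing \<sigma>
      * t ^ lsgX is_cont \<sigma> * u ^ rsgX is_cont \<sigma>
      * p ^ lsgX is_op \<sigma> * q ^ rsgX is_op \<sigma>
      * v ^ lsgX is_clos \<sigma> * w ^ rsgX is_clos \<sigma>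
      * a ^ nruns \<sigma> * b ^ (length \<sigma> - nruns \<sigma>) =
   (\<Prod>k<length \<sigma>. mnm a b r s t u p q v w (run_start \<sigma> k, run_end \<sigma> k) (lsg \<sigma> k) (rsg \<sigma> k))"
proof -
  define A where "A = {k \<in> {..<length \<sigma>}. run_start \<sigma> k}"
  have nr: "nruns \<sigma> = card A"
  proof -
    have "{i. run_start \<sigma> i} = A" by (auto simp: A_def run_start_def)
    then show ?thesis by (simp add: nruns_def)
  qed
  have pa: "a ^ nruns \<sigma> = (\<Prod>k<length \<sigma>. if run_start \<sigma> k then a else 1)"
    unfolding nr A_def by (simp add: prod.inter_filter[symmetric])
  have "length \<sigma> - nruns \<sigma> = card ({..<length \<sigma>} - A)"
    unfolding nr by (subst card_Diff_subset) (auto simp: A_def)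
  also have "{..<length \<sigma>} - A = {k \<in> {..<length \<sigma>}. \<not> run_start \<sigma> k}" by (auto simp: A_def)
  finally have cd: "length \<sigma> - nruns \<sigma> = card {k \<in> {..<length \<sigma>}. \<not> run_start \<sigma> k}" .
  have pb: "b ^ (length \<sigma> - nruns \<sigma>) = (\<Prod>k<length \<sigma>. if run_start \<sigma> k then 1 else b)"
  proof -
    have "b ^ (length \<sigma> - nruns \<sigma>) = (\<Prod>k\<in>{k \<in> {..<length \<sigma>}. \<not> run_start \<sigma> k}. b)"
      unfolding cd by simp
    also have "\<dots> = (\<Prod>k<length \<sigma>. if \<not> run_start \<sigma> k then b else 1)" by (rule prod.inter_filter) simp
    also have "\<dots> = (\<Prod>k<length \<sigma>. if run_start \<sigma> k then 1 else b)" by (rule prod.cong) auto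
    finally show ?thesis .
  qed
  have "(\<Prod>k<length \<sigma>. mnm a b r s t u p q v w (run_start \<sigma> k, run_end \<sigma> k) (lsg \<sigma> k) (rsg \<sigma> k)) =
     (\<Prod>k<length \<sigma>. (if is_sing \<sigma> k then r ^ lsg \<sigma> k else 1) * (if is_sing \<sigma> k then s ^ rsg \<sigma> k else 1)
       * (if is_cont \<sigma> k then t ^ lsg \<sigma> k else 1) * (if is_cont \<sigma> k then u ^ rsg \<sigma> k else 1)
       * (if is_op \<sigma> k then p ^ lsg \<sigma> k else 1) * (if is_op \<sigma> k then q ^ rsg \<sigma> k else 1)
       * (if is_clos \<sigma> k then v ^ lsg \<sigma> k else 1) * (if is_clos \<sigma> k then w ^ rsg \<sigma> k else 1)
       * (if run_start \<sigma> k then a else 1) * (if run_start \<sigma> k then 1 else b))"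
  proof (rule prod.cong[OF refl])
    fix k assume "k \<in> {..<length \<sigma>}"
    then have kl: "k < length \<sigma>" by simp
    show "mnm a b r s t u p q v w (run_start \<sigma> k, run_end \<sigma> k) (lsg \<sigma> k) (rsg \<sigma> k) =
     (if is_sing \<sigma> k then r ^ lsg \<sigma> k else 1) * (if is_sing \<sigma> k then s ^ rsg \<sigma> k else 1)
       * (if is_cont \<sigma> k then t ^ lsg \<sigma> k else 1) * (if is_cont \<sigma> k then u ^ rsg \<sigma> k else 1)
       * (if is_op \<sigma> k then p ^ lsg \<sigma> k else 1) * (if is_op \<sigma> k then q ^ rsg \<sigma> k else 1)
       * (if is_clos \<sigma> k then v ^ lsg \<sigma> k else 1) * (if is_clos \<sigma> k then w ^ rsg \<sigma> k else 1)
       * (if run_start \<sigma> k then a else 1) * (if run_start \<sigma> k then 1 else b)"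
      using kl
      by (cases "run_start \<sigma> k"; cases "run_end \<sigma> k")
        (simp_all add: mnm_def is_sing_def is_cont_def is_op_def is_clos_def mult.commute mult.left_commute)
  qed
  also have "\<dots> = r ^ lsgX is_sing \<sigma> * s ^ rsgX is_sing \<sigma>
      * t ^ lsgX is_cont \<sigma> * u ^ rsgX is_cont \<sigma>
      * p ^ lsgX is_op \<sigma> * q ^ rsgX is_op \<sigma>
      * v ^ lsgX is_clos \<sigma> * w ^ rsgX is_clos \<sigma>
      * a ^ nruns \<sigma> * b ^ (length \<sigma> - nruns \<sigma>)"
    unfolding prod.distrib lsgX_def rsgX_def powX pa pb ..
  finally show ?thesis by simp
qed

end

theorem theorem1:
  fixes a b r s t u p q v w :: "'a::comm_ring_1"
    and L :: "'a poly \<Rightarrow> 'a"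
  assumes L_add: "\<And>f g. L (f + g) = L f + L g"
    and L_smult: "\<And>c f. L (smult c f) = c * L f"
    and L_one: "L 1 = 1"
    and L_orth: "\<And>m. m \<ge> 1 \<Longrightarrow> L (OP a b r s t u p q v w m) = 0"
  shows "L ([:0, 1:] ^ n) =
    (\<Sum>\<sigma>\<in>perms n.
        r ^ lsgX is_sing \<sigma> * s ^ rsgX is_sing \<sigma>
      * t ^ lsgX is_cont \<sigma> * u ^ rsgX is_cont \<sigma>
      * p ^ lsgX is_op \<sigma> * q ^ rsgX is_op \<sigma>
      * v ^ lsgX is_clos \<sigma> * w ^ rsgX is_clos \<sigma>
      * a ^ nruns \<sigma> * b ^ (n - nruns \<sigma>))"
proof -
  have L0: "L 0 = 0" using L_add[of 0 0] by simp
  have Lsum: "finite A \<Longrightarrow> L (\<Sum>k\<in>A. f k) = (\<Sum>k\<in>A. L (f k))" for A and f :: "nat \<Rightarrow> 'a poly"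
    by (induction A rule: finite_induct) (simp_all add: L0 L_add)
  have "L ([:0, 1:] ^ n) = (\<Sum>k\<le>n. nu a b r s t u p q v w n k * L (OP a b r s t u p q v w k))"
    unfolding x_pow[where a=a and b=b and r=r and s=s and t=t and u=u and p=p and q=q and v=v and w=w and m=n] by (simp add: Lsum L_smult)
  also have "\<dots> = (\<Sum>k\<in>{0}. nu a b r s t u p q v w n k * L (OP a b r s t u p q v w k))"
    by (rule sum.mono_neutral_right) (auto simp: L_orth)
  also have "\<dots> = nu a b r s t u p q v w n 0" by (simp add: L_one)
  also have "\<dots> = MM a b r s t u p q v w n 0"
    using MM_nu[of a b r s t u p q v w n 0] by (simp add: gg_def)
  also have "\<dots> = (\<Sum>\<sigma>\<in>perms n.
        r ^ lsgX is_sing \<sigma> * s ^ rsgX is_sing \<sigma>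
      * t ^ lsgX is_cont \<sigma> * u ^ rsgX is_cont \<sigma>
      * p ^ lsgX is_op \<sigma> * q ^ rsgX is_op \<sigma>
      * v ^ lsgX is_clos \<sigma> * w ^ rsgX is_clos \<sigma>
      * a ^ nruns \<sigma> * b ^ (n - nruns \<sigma>))"
    unfolding MM_def
  proof (rule sum.reindex_bij_witness[where j = elems and i = stR])
    fix R assume R: "R \<in> SS n 0"
    show "stR (elems R) = R" using stR_elems[OF R] .
    show "elems R \<in> perms n" using R by (simp add: SS_def valid_def perms_def)
    then have len: "length (elems R) = n" by (rule perms_len)
    show "r ^ lsgX is_sing (elems R) * s ^ rsgX is_sing (elems R)
      * t ^ lsgX is_cont (elems R) * u ^ rsgX is_cont (elems R)
      * p ^ lsgX is_op (elems R) * q ^ rsgX is_op (elems R)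
      * v ^ lsgX is_clos (elems R) * w ^ rsgX is_clos (elems R)
      * a ^ nruns (elems R) * b ^ (n - nruns (elems R)) = wt a b r s t u p q v w R"
      using Fz_pos[where a=a and b=b and r=r and s=s and t=t and u=u and p=p and q=q and v=v and w=w and \<sigma>="elems R"] WT_pos[OF R, where a=a and b=b and r=r and s=s and t=t and u=u and p=p and q=q and v=v and w=w] len by simp
  next
    fix \<sigma> assume P: "\<sigma> \<in> perms n"
    show "elems (stR \<sigma>) = \<sigma>" by (rule elems_stR)
    show "stR \<sigma> \<in> SS n 0" using stR_SS[OF P] .
  qed
  finally show ?thesis .
qed

end
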